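(* Let $0<m<1$, $\mu>0$, let $f:\mathbb{R}\to\mathbb{R}$ be smooth, and let $u_->u_+=0$. For $s\in\mathbb{R}$ put $g(u)=-s(u-u_-)+f(u)-f(u_-)$. (1) (Necessary condition.) If the equation $u_t+f(u)_x=\mu (u^m)_{xx}$ admits a monotonically decreasing shock profile $u(x,t)=U(x-st)$ connecting $u_-$ and $u_+$, i.e. $U$ is monotonically decreasing, solves $-sU_\xi+f(U)_\xi=\mu (U^m)_{\xi\xi}$ and satisfies $U(\xi)\to u_\pm$ as $\xi\to\pm\infty$, then $u_\pm$ and $s$ satisfy the Rankine–Hugoniot condition $$s=\frac{f(u_+)-f(u_-)}{u_+-u_-}$$ and the generalized shock condition $g(u)<0$ for all $u\in(u_+,u_-)$. (2) (Sufficient condition.) If $s$ satisfies the Rankine–Hugoniot condition above and $g(u)<0$ for all $u\in(u_+,u_-)$, then there exists a monotonically decreasing solution $U(\xi)$ of $-sU_\xi+f(U)_\xi=\mu (U^m)_{\xi\xi}$ with $U(\pm\infty)=u_\pm$, and it is unique up to a shift in $\xi$. (3) (Decay properties.) In the non-degenerate case $f'(u_+)<s<f'(u_-)$ this profile satisfies $$|U_\xi|^{\frac{1}{2-m}}\sim |U(\xi)-u_+|\sim |\xi|^{-\frac{1}{1-m}}\ \text{ as }\xi\to+\infty,\qquad |U_\xi|\sim |U(\xi)-u_-|\sim e^{-\lambda|\xi|}\ \text{ as }\xi\to-\infty,$$ where $\lambda:=\frac{u_-^{1-m}}{\mu m}\big(f'(u_-)-s\big)>0$. In the degenerate case $f'(u_+)=s<f'(u_-)$,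 assuming moreover that $f''(u_+)=\cdots=f^{(k_+)}(u_+)=0$ and $f^{(k_++1)}(u_+)\neq 0$ for some integer $k_+\ge 1$, it satisfies $$|U_\xi|^{\frac{1}{k_++2-m}}\sim |U(\xi)-u_+|\sim |\xi|^{-\frac{1}{k_++1-m}}\ \text{ as }\xi\to+\infty,\qquad |U_\xi|\sim |U(\xi)-u_-|\sim e^{-\lambda|\xi|}\ \text{ as }\xi\to-\infty,$$ with the same $\lambda$.
   Context: For positive functions, $a(\xi)\sim b(\xi)$ as $\xi\to\xi_0$ means there is a constant $C\ge 1$ with $C^{-1}b\le a\le Cb$ in a neighborhood of $\xi_0$. Note that under the Rankine–Hugoniot condition $g(u)$ also equals $-s(u-u_+)+f(u)-f(u_+)$. *)

theory Defs
  imports "HOL-Analysis.Analysis"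
begin

definition smooth_fun :: "(real \<Rightarrow> real) \<Rightarrow> bool" where
  "smooth_fun f \<longleftrightarrow> (\<forall>n x. ((deriv ^^ n) f) differentiable (at x))"

definition dec_profile ::
  "real \<Rightarrow> real \<Rightarrow> (real \<Rightarrow> real) \<Rightarrow> real \<Rightarrow> real \<Rightarrow> real \<Rightarrow> (real \<Rightarrow> real) \<Rightarrow> bool" where
  "dec_profile m \<mu> f um up s U \<longleftrightarrow>
     antimono U \<and>
     (\<forall>\<xi>. U differentiable (at \<xi>)) \<and>
     (\<forall>\<xi>. (\<lambda>x. U x powr m) differentiable (at \<xi>)) \<and>
     (\<forall>\<xi>. deriv (\<lambda>x. U x powr m) differentiable (at \<xi>)) \<and>
     (\<forall>\<xi>. - s * deriv U \<xi> + deriv (\<lambda>x. f (U x)) \<xi>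
            = \<mu> * deriv (deriv (\<lambda>x. U x powr m)) \<xi>) \<and>
     (U \<longlongrightarrow> um) at_bot \<and> (U \<longlongrightarrow> up) at_top"

definition asym_equiv :: "(real \<Rightarrow> real) \<Rightarrow> (real \<Rightarrow> real) \<Rightarrow> real filter \<Rightarrow> bool" where
  "asym_equiv a b F \<longleftrightarrow>
     (\<exists>C\<ge>1. eventually (\<lambda>\<xi>. b \<xi> / C \<le> a \<xi> \<and> a \<xi> \<le> C * b \<xi>) F)"

end

theory Submission
  imports Defs
begin

lemma gronwall_zero:
  fixes V V' :: "real \<Rightarrow> real"
  assumes x01: "x0 \<le> x1"
    and der: "\<And>t. x0 \<le> t \<Longrightarrow> t \<le> x1 \<Longrightarrow> (V has_real_derivative V' t) (at t)"
    and bnd: "\<And>t. x0 \<le> t \<Longrightarrow> t \<le> x1 \<Longrightarrow> \<bar>V' t\<bar> \<le> L * \<bar>V t\<bar>"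
  shows "V x0 = 0 \<longleftrightarrow> V x1 = 0"
proof -
  have key: "V t * V' t \<le> L * (V t)\<^sup>2" if "x0 \<le> t" "t \<le> x1" for t
  proof -
    have "V t * V' t \<le> \<bar>V t\<bar> * \<bar>V' t\<bar>" by (metis abs_ge_self abs_mult)
    also have "\<dots> \<le> \<bar>V t\<bar> * (L * \<bar>V t\<bar>)" using bnd[OF that] by (simp add: mult_left_mono)
    also have "\<dots> = L * (V t)\<^sup>2" by (simp add: power2_eq_square abs_mult_self_eq)
    finally show ?thesis .
  qed
  have d1: "((\<lambda>t. (V t)\<^sup>2 * exp (- 2 * L * t)) has_real_derivative
      (2 * V t * V' t * exp (- 2 * L * t) + (V t)\<^sup>2 * (exp (- 2 * L * t) * (- 2 * L)))) (at t)"
    if "x0 \<le> t" "t \<le> x1" for t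
    using der[OF that]
    by (auto intro!: derivative_eq_intros)
  have d2: "((\<lambda>t. (V t)\<^sup>2 * exp (2 * L * t)) has_real_derivative
      (2 * V t * V' t * exp (2 * L * t) + (V t)\<^sup>2 * (exp (2 * L * t) * (2 * L)))) (at t)"
    if "x0 \<le> t" "t \<le> x1" for t
    using der[OF that]
    by (auto intro!: derivative_eq_intros)
  have m1: "(V x1)\<^sup>2 * exp (- 2 * L * x1) \<le> (V x0)\<^sup>2 * exp (- 2 * L * x0)"
  proof (rule DERIV_nonpos_imp_nonincreasing[OF x01])
    fix t assume t: "x0 \<le> t" "t \<le> x1"
    have "2 * V t * V' t * exp (- 2 * L * t) + (V t)\<^sup>2 * (exp (- 2 * L * t) * (- 2 * L))
        = 2 * exp (- 2 * L * t) * (V t * V' t - L * (V t)\<^sup>2)" by (simp add: algebra_simps)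
    also have "\<dots> \<le> 0" using key[OF t] by (simp add: mult_nonneg_nonpos)
    finally show "\<exists>y. ((\<lambda>t. (V t)\<^sup>2 * exp (- 2 * L * t)) has_real_derivative y) (at t) \<and> y \<le> 0"
      using d1[OF t] by blast
  qed
  have m2: "(V x0)\<^sup>2 * exp (2 * L * x0) \<le> (V x1)\<^sup>2 * exp (2 * L * x1)"
  proof (rule DERIV_nonneg_imp_nondecreasing[OF x01])
    fix t assume t: "x0 \<le> t" "t \<le> x1"
    have "2 * V t * V' t * exp (2 * L * t) + (V t)\<^sup>2 * (exp (2 * L * t) * (2 * L))
        = 2 * exp (2 * L * t) * (V t * V' t + L * (V t)\<^sup>2)" by (simp add: algebra_simps)
    also have "\<dots> \<ge> 0"
    proof -
      have "- (V t * V' t) \<le> \<bar>V t\<bar> * \<bar>V' t\<bar>" by (metis abs_ge_minus_self abs_mult)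
      also have "\<dots> \<le> \<bar>V t\<bar> * (L * \<bar>V t\<bar>)" using bnd[OF t] by (simp add: mult_left_mono)
      also have "\<dots> = L * (V t)\<^sup>2" by (simp add: power2_eq_square abs_mult_self_eq)
      finally show ?thesis by simp
    qed
    finally show "\<exists>y. ((\<lambda>t. (V t)\<^sup>2 * exp (2 * L * t)) has_real_derivative y) (at t) \<and> y \<ge> 0"
      using d2[OF t] by blast
  qed
  show ?thesis
  proof
    assume "V x0 = 0"
    with m1 have "(V x1)\<^sup>2 * exp (- 2 * L * x1) \<le> 0" by simp
    hence "(V x1)\<^sup>2 \<le> 0" by (simp add: mult_le_0_iff)
    thus "V x1 = 0" by simp
  next
    assume "V x1 = 0"
    with m2 have "(V x0)\<^sup>2 * exp (2 * L * x0) \<le> 0" by simp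
    hence "(V x0)\<^sup>2 \<le> 0" by (simp add: mult_le_0_iff)
    thus "V x0 = 0" by simp
  qed
qed

lemma local_lip:
  fixes \<phi> :: "real \<Rightarrow> real"
  assumes "(\<phi> has_real_derivative D) (at c)"
  shows "\<exists>L>0. \<exists>\<delta>>0. \<forall>u. \<bar>u - c\<bar> < \<delta> \<longrightarrow> \<bar>\<phi> u - \<phi> c\<bar> \<le> L * \<bar>u - c\<bar>"
proof -
  have "((\<lambda>y. (\<phi> y - \<phi> c) / (y - c)) \<longlongrightarrow> D) (at c)"
    using assms by (simp add: has_field_derivative_iff)
  hence "eventually (\<lambda>y. dist ((\<phi> y - \<phi> c) / (y - c)) D < 1) (at c)"
    by (rule tendstoD) simp
  then obtain d where d: "d > 0" and hd: "\<And>y. y \<noteq> c \<Longrightarrow> dist y c < d \<Longrightarrow> dist ((\<phi> y - \<phi> c) / (y - c)) D < 1"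
    unfolding eventually_at by auto
  show ?thesis
  proof (intro exI conjI allI impI)
    show "\<bar>D\<bar> + 1 > 0" by simp
    show "d > 0" by fact
    fix u assume u: "\<bar>u - c\<bar> < d"
    show "\<bar>\<phi> u - \<phi> c\<bar> \<le> (\<bar>D\<bar> + 1) * \<bar>u - c\<bar>"
    proof (cases "u = c")
      case True thus ?thesis by simp
    next
      case False
      hence "\<bar>(\<phi> u - \<phi> c) / (u - c) - D\<bar> < 1" using hd[of u] u by (simp add: dist_real_def)
      hence "\<bar>(\<phi> u - \<phi> c) / (u - c)\<bar> \<le> \<bar>D\<bar> + 1" by linarith
      hence "\<bar>\<phi> u - \<phi> c\<bar> / \<bar>u - c\<bar> \<le> \<bar>D\<bar> + 1" by (simp add: abs_divide)
      thus ?thesis using False by (simp add: divide_le_eq)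
    qed
  qed
qed

lemma deriv_limit_zero_top:
  fixes P P' :: "real \<Rightarrow> real"
  assumes der: "\<And>x. (P has_real_derivative P' x) (at x)"
    and lP: "(P \<longlongrightarrow> a) at_top" and lD: "(P' \<longlongrightarrow> l) at_top"
  shows "l = 0"
proof (rule ccontr)
  assume l: "l \<noteq> 0"
  define e where "e = \<bar>l\<bar> / 2"
  have e: "e > 0" using l by (simp add: e_def)
  have "((\<lambda>x. P (x + 1)) \<longlongrightarrow> a) at_top"
  proof -
    have "filterlim (\<lambda>x::real. 1 + x) at_top at_top"
      by (rule filterlim_tendsto_add_at_top[OF tendsto_const filterlim_ident])
    hence "filterlim (\<lambda>x::real. x + 1) at_top at_top" by (simp add: add.commute)
    thus ?thesis by (rule filterlim_compose[OF lP])
  qed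
  hence "((\<lambda>x. P (x + 1) - P x) \<longlongrightarrow> a - a) at_top" by (intro tendsto_diff lP)
  hence "eventually (\<lambda>x. dist (P (x + 1) - P x) 0 < e) at_top" using e by (intro tendstoD) auto
  moreover have "eventually (\<lambda>x. dist (P' x) l < e) at_top" using lD e by (intro tendstoD) auto
  ultimately have "eventually (\<lambda>x. dist (P (x + 1) - P x) 0 < e \<and> (\<forall>y\<ge>x. dist (P' y) l < e)) at_top"
    using eventually_all_ge_at_top[of "\<lambda>y. dist (P' y) l < e"] by (auto elim: eventually_elim2)
  then obtain N where "\<forall>x\<ge>N. dist (P (x + 1) - P x) 0 < e \<and> (\<forall>y\<ge>x. dist (P' y) l < e)"
    by (auto simp: eventually_at_top_linorder)
  then obtain x where x1: "\<bar>P (x + 1) - P x\<bar> < e" and x2: "\<And>y. y \<ge> x \<Longrightarrow> \<bar>P' y - l\<bar> < e"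
    by (auto simp: dist_real_def)
  obtain z where z: "x < z" "z < x + 1" "P (x + 1) - P x = (x + 1 - x) * P' z"
    using MVT2[of x "x+1" P P'] der by auto
  have "\<bar>P' z\<bar> < e" using z x1 by simp
  moreover have "\<bar>P' z - l\<bar> < e" using x2 z by simp
  ultimately show False unfolding e_def by linarith
qed

lemma deriv_limit_zero_bot:
  fixes P P' :: "real \<Rightarrow> real"
  assumes der: "\<And>x. (P has_real_derivative P' x) (at x)"
    and lP: "(P \<longlongrightarrow> a) at_bot" and lD: "(P' \<longlongrightarrow> l) at_bot"
  shows "l = 0"
proof -
  have der': "((\<lambda>x. P (- x)) has_real_derivative - P' (- x)) (at x)" for x
    using DERIV_chain2[OF der[of "-x"] DERIV_minus[OF DERIV_ident]] by simp
  have "((\<lambda>x. P (- x)) \<longlongrightarrow> a) at_top"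
    using lP by (simp add: at_bot_mirror filterlim_filtermap)
  moreover have "((\<lambda>x. - P' (- x)) \<longlongrightarrow> - l) at_top"
    using lD by (intro tendsto_minus) (simp add: at_bot_mirror filterlim_filtermap)
  ultimately have "- l = 0" by (rule deriv_limit_zero_top[OF der'])
  thus ?thesis by simp
qed

lemma antimono_deriv_nonpos:
  fixes P :: "real \<Rightarrow> real"
  assumes "antimono P" "(P has_real_derivative D) (at x)"
  shows "D \<le> 0"
proof -
  have lim: "((\<lambda>y. (P y - P x) / (y - x)) \<longlongrightarrow> D) (at x)"
    using assms(2) by (simp add: has_field_derivative_iff)
  have "eventually (\<lambda>y. (P y - P x) / (y - x) \<le> 0) (at x)"
  proof (rule eventually_at_filter[THEN iffD2], rule always_eventually, intro allI impI)
    fix y assume "y \<noteq> x"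
    show "(P y - P x) / (y - x) \<le> 0"
    proof (cases "y < x")
      case True
      hence "P y \<ge> P x" using assms(1) by (simp add: antimono_def)
      thus ?thesis using True by (simp add: divide_nonneg_neg)
    next
      case False
      hence "P y \<le> P x" using assms(1) by (simp add: antimono_def)
      thus ?thesis using False \<open>y \<noteq> x\<close> by (simp add: divide_nonpos_pos)
    qed
  qed
  thus ?thesis using lim by (intro tendsto_upperbound) auto
qed

lemma cont_nbhd:
  fixes U :: "real \<Rightarrow> real"
  assumes "isCont U x" "\<delta> > 0"
  shows "\<exists>e>0. \<forall>y. \<bar>y - x\<bar> < e \<longrightarrow> \<bar>U y - U x\<bar> < \<delta>"
proof -
  have "eventually (\<lambda>y. dist (U y) (U x) < \<delta>) (at x)"
    using assms by (intro tendstoD) (auto simp: isCont_def)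
  then obtain d where d: "d > 0" "\<And>y. y \<noteq> x \<Longrightarrow> dist y x < d \<Longrightarrow> dist (U y) (U x) < \<delta>"
    unfolding eventually_at by auto
  show ?thesis
    using d assms(2) by (intro exI[of _ d]) (metis abs_zero cancel_comm_monoid_add_class.diff_cancel dist_real_def)
qed

lemma no_touch_left:
  fixes U U' :: "real \<Rightarrow> real"
  assumes der: "\<And>\<xi>. (U has_real_derivative U' \<xi>) (at \<xi>)"
    and bnd: "\<And>\<xi>. \<bar>U \<xi> - c\<bar> < \<delta> \<Longrightarrow> \<bar>U' \<xi>\<bar> \<le> L * \<bar>U \<xi> - c\<bar>" and \<delta>: "\<delta> > 0"
    and low: "\<And>\<xi>. \<xi> \<le> a \<Longrightarrow> U \<xi> \<noteq> c"
  shows "U \<xi> \<noteq> c"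
proof
  assume U\<xi>: "U \<xi> = c"
  define S where "S = {\<xi>. U \<xi> = c}"
  have cont: "isCont U x" for x using der DERIV_isCont by blast
  have "closed S" unfolding S_def
    by (rule closed_Collect_eq) (auto intro: continuous_at_imp_continuous_on cont)
  moreover have "S \<noteq> {}" using U\<xi> S_def by auto
  moreover have bdd: "bdd_below S" unfolding S_def bdd_below_def
    by (metis low mem_Collect_eq nle_le)
  ultimately have a0S: "Inf S \<in> S" using closed_contains_Inf by blast
  define a0 where "a0 = Inf S"
  have Ua0: "U a0 = c" using a0S a0_def S_def by auto
  obtain e where e: "e > 0" "\<And>y. \<bar>y - a0\<bar> < e \<Longrightarrow> \<bar>U y - U a0\<bar> < \<delta>"
    using cont_nbhd[OF cont \<delta>] by blast
  have "U (a0 - e/2) - c = 0 \<longleftrightarrow> U a0 - c = 0"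
  proof (rule gronwall_zero[where V="\<lambda>t. U t - c" and V' = U' and L = L])
    show "a0 - e/2 \<le> a0" using e by simp
    fix t assume t: "a0 - e/2 \<le> t" "t \<le> a0"
    show "((\<lambda>t. U t - c) has_real_derivative U' t) (at t)"
      using der[of t] by (auto intro!: derivative_eq_intros)
    have "\<bar>U t - c\<bar> < \<delta>" using e(2)[of t] t e(1) Ua0 by auto
    thus "\<bar>U' t\<bar> \<le> L * \<bar>U t - c\<bar>" by (rule bnd)
  qed
  hence "a0 - e/2 \<in> S" using Ua0 S_def by simp
  hence "a0 \<le> a0 - e/2" unfolding a0_def using bdd by (rule cInf_lower)
  thus False using e by simp
qed

lemma no_touch_right:
  fixes U U' :: "real \<Rightarrow> real"
  assumes der: "\<And>\<xi>. (U has_real_derivative U' \<xi>) (at \<xi>)"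
    and bnd: "\<And>\<xi>. \<bar>U \<xi> - c\<bar> < \<delta> \<Longrightarrow> \<bar>U' \<xi>\<bar> \<le> L * \<bar>U \<xi> - c\<bar>" and \<delta>: "\<delta> > 0"
    and high: "\<And>\<xi>. \<xi> \<ge> b \<Longrightarrow> U \<xi> \<noteq> c"
  shows "U \<xi> \<noteq> c"
proof
  assume U\<xi>: "U \<xi> = c"
  define S where "S = {\<xi>. U \<xi> = c}"
  have cont: "isCont U x" for x using der DERIV_isCont by blast
  have "closed S" unfolding S_def
    by (rule closed_Collect_eq) (auto intro: continuous_at_imp_continuous_on cont)
  moreover have "S \<noteq> {}" using U\<xi> S_def by auto
  moreover have bdd: "bdd_above S" unfolding S_def bdd_above_def
    by (metis high mem_Collect_eq nle_le)
  ultimately have a0S: "Sup S \<in> S" using closed_contains_Sup by blast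
  define a0 where "a0 = Sup S"
  have Ua0: "U a0 = c" using a0S a0_def S_def by auto
  obtain e where e: "e > 0" "\<And>y. \<bar>y - a0\<bar> < e \<Longrightarrow> \<bar>U y - U a0\<bar> < \<delta>"
    using cont_nbhd[OF cont \<delta>] by blast
  have "U a0 - c = 0 \<longleftrightarrow> U (a0 + e/2) - c = 0"
  proof (rule gronwall_zero[where V="\<lambda>t. U t - c" and V' = U' and L = L])
    show "a0 \<le> a0 + e/2" using e by simp
    fix t assume t: "a0 \<le> t" "t \<le> a0 + e/2"
    show "((\<lambda>t. U t - c) has_real_derivative U' t) (at t)"
      using der[of t] by (auto intro!: derivative_eq_intros)
    have "\<bar>U t - c\<bar> < \<delta>" using e(2)[of t] t e(1) Ua0 by auto
    thus "\<bar>U' t\<bar> \<le> L * \<bar>U t - c\<bar>" by (rule bnd)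
  qed
  hence "a0 + e/2 \<in> S" using Ua0 S_def by simp
  hence "a0 + e/2 \<le> a0" unfolding a0_def using bdd by (rule cSup_upper)
  thus False using e by simp
qed

locale tw =
  fixes m \<mu> um :: real and f :: "real \<Rightarrow> real"
  assumes m0: "0 < m" and m1: "m < 1" and mu: "0 < \<mu>" and fs: "smooth_fun f" and um0: "0 < um"
begin

definition gg :: "real \<Rightarrow> real \<Rightarrow> real" where "gg s u = - s * (u - um) + f u - f um"
definition hh :: "real \<Rightarrow> real \<Rightarrow> real" where "hh s u = gg s u * u powr (1 - m) / (\<mu> * m)"

lemma fk_der: "((deriv^^k) f has_real_derivative (deriv^^(Suc k)) f x) (at x)"
  using fs unfolding smooth_fun_def by (simp add: DERIV_deriv_iff_real_differentiable)

lemma f_der: "(f has_real_derivative deriv f x) (at x)"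
  using fk_der[of 0] by simp

lemma fk_cont: "isCont ((deriv^^k) f) x"
  using fk_der DERIV_isCont by blast

lemma f_cont: "isCont f x"
  using fk_cont[where k=0 and x=x] by simp

lemma f'_der: "(deriv f has_real_derivative (deriv^^2) f x) (at x)"
  using fk_der[of 1] by (simp add: numeral_2_eq_2)

lemma f'_cont: "isCont (deriv f) x"
  using fk_cont[where k=1 and x=x] by simp

lemma gg_der: "(gg s has_real_derivative (deriv f u - s)) (at u)"
  unfolding gg_def[abs_def] by (auto intro!: derivative_eq_intros f_der)

lemma gg_cont: "isCont (gg s) u"
  using gg_der DERIV_isCont by blast

lemma gg_um[simp]: "gg s um = 0" by (simp add: gg_def)

lemma hh_der: "u > 0 \<Longrightarrow> (hh s has_real_derivative
   ((deriv f u - s) * u powr (1 - m) + gg s u * ((1 - m) * u powr (1 - m - 1))) / (\<mu> * m)) (at u)"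
  unfolding hh_def[abs_def]
  using m0 mu by (auto intro!: derivative_eq_intros gg_der DERIV_fun_powr[of "\<lambda>x. x", simplified])

lemma hh_cont: "u > 0 \<Longrightarrow> isCont (hh s) u"
  using hh_der DERIV_isCont by blast

end

context tw begin

lemma profile_basic:
  assumes P: "dec_profile m \<mu> f um 0 s U"
  shows "s = (f 0 - f um) / (0 - um)" and "\<And>\<xi>. 0 \<le> U \<xi>" and "\<And>\<xi>. U \<xi> \<le> um"
    and "\<And>\<xi>. \<mu> * deriv (\<lambda>x. U x powr m) \<xi> = gg s (U \<xi>)"
    and "\<And>\<xi>. (U has_real_derivative deriv U \<xi>) (at \<xi>)"
    and "\<And>\<xi>. 0 < U \<xi> \<Longrightarrow> deriv U \<xi> = hh s (U \<xi>)"
    and "\<And>\<xi>. ((\<lambda>x. U x powr m) has_real_derivative deriv (\<lambda>x. U x powr m) \<xi>) (at \<xi>)"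
proof -
  define Pw where "Pw = (\<lambda>x. U x powr m)"
  define D where "D = deriv Pw"
  from P have am: "antimono U" and dU: "\<And>\<xi>. U differentiable (at \<xi>)"
    and dP: "\<And>\<xi>. Pw differentiable (at \<xi>)" and dD: "\<And>\<xi>. D differentiable (at \<xi>)"
    and ode: "\<And>\<xi>. - s * deriv U \<xi> + deriv (\<lambda>x. f (U x)) \<xi> = \<mu> * deriv D \<xi>"
    and lb: "(U \<longlongrightarrow> um) at_bot" and lt: "(U \<longlongrightarrow> 0) at_top"
    unfolding dec_profile_def Pw_def D_def by auto
  have hU: "(U has_real_derivative deriv U \<xi>) (at \<xi>)" for \<xi>
    using dU DERIV_deriv_iff_real_differentiable by blast
  have hP: "(Pw has_real_derivative D \<xi>) (at \<xi>)" for \<xi>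
    using dP DERIV_deriv_iff_real_differentiable D_def by blast
  have hD: "(D has_real_derivative deriv D \<xi>) (at \<xi>)" for \<xi>
    using dD DERIV_deriv_iff_real_differentiable by blast
  have hfU: "((\<lambda>x. f (U x)) has_real_derivative deriv f (U \<xi>) * deriv U \<xi>) (at \<xi>)" for \<xi>
    by (rule DERIV_chain2[OF f_der hU])
  have dfU: "deriv (\<lambda>x. f (U x)) \<xi> = deriv f (U \<xi>) * deriv U \<xi>" for \<xi>
    using hfU by (rule DERIV_imp_deriv)
  define F where "F = (\<lambda>\<xi>. \<mu> * D \<xi> - (- s * U \<xi> + f (U \<xi>)))"
  have hF: "(F has_real_derivative 0) (at \<xi>)" for \<xi>
  proof -
    have "(F has_real_derivative (\<mu> * deriv D \<xi> - (- s * deriv U \<xi> + deriv f (U \<xi>) * deriv U \<xi>))) (at \<xi>)"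
      unfolding F_def by (auto intro!: derivative_eq_intros hD hU hfU)
    moreover have "\<mu> * deriv D \<xi> - (- s * deriv U \<xi> + deriv f (U \<xi>) * deriv U \<xi>) = 0"
      using ode[of \<xi>] dfU[of \<xi>] by simp
    ultimately show ?thesis by simp
  qed
  define K where "K = F 0"
  have FK: "F \<xi> = K" for \<xi> unfolding K_def using hF by (metis DERIV_isconst_all)
  have DK: "D \<xi> = (K - s * U \<xi> + f (U \<xi>)) / \<mu>" for \<xi>
    using FK[of \<xi>] mu unfolding F_def by (simp add: field_simps)
  show U0: "0 \<le> U \<xi>" for \<xi>
  proof (rule tendsto_upperbound[OF lt])
    show "eventually (\<lambda>x. U x \<le> U \<xi>) at_top"
      using am unfolding eventually_at_top_linorder antimono_def by auto
  qed simp
  show Uum: "U \<xi> \<le> um" for \<xi>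
  proof (rule tendsto_lowerbound[OF lb])
    show "eventually (\<lambda>x. U \<xi> \<le> U x) at_bot"
      using am unfolding eventually_at_bot_linorder antimono_def by auto
  qed simp
  have lPb: "(Pw \<longlongrightarrow> um powr m) at_bot"
    unfolding Pw_def using um0 by (intro tendsto_powr lb tendsto_const) simp
  have lPt: "(Pw \<longlongrightarrow> 0) at_top"
    unfolding Pw_def using m0 U0 by (intro tendsto_zero_powrI lt tendsto_const) auto
  have lDb: "(D \<longlongrightarrow> (K - s * um + f um) / \<mu>) at_bot"
    unfolding DK by (intro tendsto_intros lb isCont_tendsto_compose[OF f_cont lb]) (use mu in simp)
  have lDt: "(D \<longlongrightarrow> (K - s * 0 + f 0) / \<mu>) at_top"
    unfolding DK by (intro tendsto_intros lt isCont_tendsto_compose[OF f_cont lt]) (use mu in simp)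
  have e1: "(K - s * um + f um) / \<mu> = 0" by (rule deriv_limit_zero_bot[OF hP lPb lDb])
  have e2: "(K - s * 0 + f 0) / \<mu> = 0" by (rule deriv_limit_zero_top[OF hP lPt lDt])
  from e1 e2 mu have K1: "K = s * um - f um" and K2: "K = - f 0" by (auto simp: field_simps)
  show "s = (f 0 - f um) / (0 - um)" using K1 K2 um0 by (simp add: field_simps)
  show gD: "\<mu> * deriv (\<lambda>x. U x powr m) \<xi> = gg s (U \<xi>)" for \<xi>
    using DK[of \<xi>] K1 mu unfolding D_def Pw_def gg_def by (simp add: field_simps)
  show "(U has_real_derivative deriv U \<xi>) (at \<xi>)" for \<xi> by (rule hU)
  show "((\<lambda>x. U x powr m) has_real_derivative deriv (\<lambda>x. U x powr m) \<xi>) (at \<xi>)" for \<xi>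
    using hP unfolding Pw_def D_def .
  show "deriv U \<xi> = hh s (U \<xi>)" if pos: "0 < U \<xi>" for \<xi>
  proof -
    have "(Pw has_real_derivative m * U \<xi> powr (m - 1) * deriv U \<xi>) (at \<xi>)"
      unfolding Pw_def using DERIV_fun_powr[OF hU pos, of m] by simp
    hence "D \<xi> = m * U \<xi> powr (m - 1) * deriv U \<xi>" using hP DERIV_unique by blast
    hence "gg s (U \<xi>) = \<mu> * (m * U \<xi> powr (m - 1) * deriv U \<xi>)"
      using gD[of \<xi>] unfolding D_def Pw_def by simp
    hence "gg s (U \<xi>) * U \<xi> powr (1 - m) = \<mu> * m * deriv U \<xi> * (U \<xi> powr (m - 1) * U \<xi> powr (1 - m))"
      by (simp add: algebra_simps)
    also have "U \<xi> powr (m - 1) * U \<xi> powr (1 - m) = 1"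
      using pos by (simp add: powr_add[symmetric])
    finally show ?thesis unfolding hh_def using mu m0 by (simp add: field_simps)
  qed
qed

end

context tw begin

lemma gg_zero_RH: "s = (f 0 - f um) / (0 - um) \<Longrightarrow> gg s 0 = 0"
  using um0 unfolding gg_def by (simp add: field_simps)

lemma hh_neg: "gg s u < 0 \<Longrightarrow> 0 < u \<Longrightarrow> hh s u < 0"
  unfolding hh_def using m0 mu by (simp add: divide_neg_pos mult_neg_pos)

lemma profile_range:
  assumes P: "dec_profile m \<mu> f um 0 s U" and u0: "0 < u0" "u0 < um"
  shows "\<exists>\<xi>. U \<xi> = u0" and "\<exists>a. \<forall>\<xi>\<le>a. U \<xi> > u0" and "\<exists>b. \<forall>\<xi>\<ge>b. U \<xi> < u0"
proof -
  from P have am: "antimono U" and lb: "(U \<longlongrightarrow> um) at_bot" and lt: "(U \<longlongrightarrow> 0) at_top"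
    unfolding dec_profile_def by auto
  have "eventually (\<lambda>x. U x > u0) at_bot" using order_tendstoD(1)[OF lb u0(2)] .
  then obtain a where a: "U a > u0" by (auto simp: eventually_at_bot_linorder)
  have "eventually (\<lambda>x. U x < u0) at_top" using order_tendstoD(2)[OF lt u0(1)] .
  then obtain b where b: "U b < u0" by (auto simp: eventually_at_top_linorder)
  show "\<exists>a. \<forall>\<xi>\<le>a. U \<xi> > u0" using a am by (metis antimonoD order_less_le_trans)
  show "\<exists>b. \<forall>\<xi>\<ge>b. U \<xi> < u0" using b am by (metis antimonoD order_le_less_trans)
  have ab: "a \<le> b"
  proof (rule ccontr)
    assume "\<not> a \<le> b" hence "U a \<le> U b" using am by (simp add: antimono_def)
    thus False using a b by simp
  qed
  have "\<forall>x. a \<le> x \<and> x \<le> b \<longrightarrow> isCont U x"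
    using profile_basic(5)[OF P] DERIV_isCont by blast
  thus "\<exists>\<xi>. U \<xi> = u0" using IVT2[of U b u0 a] a b ab by force
qed

lemma profile_gneg:
  assumes P: "dec_profile m \<mu> f um 0 s U" and u0: "0 < u0" "u0 < um"
  shows "gg s u0 < 0"
proof -
  obtain \<xi>0 where x0: "U \<xi>0 = u0" using profile_range[OF P u0] by blast
  obtain a where a: "\<forall>\<xi>\<le>a. U \<xi> > u0" using profile_range[OF P u0] by blast
  have am: "antimono U" using P unfolding dec_profile_def by auto
  have amP: "antimono (\<lambda>x. U x powr m)"
    using am profile_basic(2)[OF P] m0 unfolding antimono_def by (auto intro: powr_mono2)
  have "deriv (\<lambda>x. U x powr m) \<xi>0 \<le> 0"
    by (rule antimono_deriv_nonpos[OF amP profile_basic(7)[OF P]])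
  hence le: "gg s u0 \<le> 0" using profile_basic(4)[OF P, of \<xi>0] x0 mu
    by (metis mult_le_0_iff order_less_le)
  show ?thesis
  proof (rule ccontr)
    assume "\<not> gg s u0 < 0"
    hence g0: "gg s u0 = 0" using le by simp
    hence h0: "hh s u0 = 0" unfolding hh_def by simp
    obtain L \<delta> where L: "L > 0" "\<delta> > 0" and Lb: "\<And>u. \<bar>u - u0\<bar> < \<delta> \<Longrightarrow> \<bar>hh s u - hh s u0\<bar> \<le> L * \<bar>u - u0\<bar>"
      using local_lip[OF hh_der[OF u0(1)]] by blast
    have "U \<xi>0 \<noteq> u0"
    proof (rule no_touch_left[where U = U and U' = "deriv U" and \<delta> = "min \<delta> u0" and L = L and a = a])
      show "(U has_real_derivative deriv U \<xi>) (at \<xi>)" for \<xi> by (rule profile_basic(5)[OF P])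
      show "min \<delta> u0 > 0" using L u0 by simp
      show "U \<xi> \<noteq> u0" if "\<xi> \<le> a" for \<xi> using a that by force
      fix \<xi> assume "\<bar>U \<xi> - u0\<bar> < min \<delta> u0"
      hence "0 < U \<xi>" "\<bar>U \<xi> - u0\<bar> < \<delta>" by auto
      thus "\<bar>deriv U \<xi>\<bar> \<le> L * \<bar>U \<xi> - u0\<bar>"
        using Lb[of "U \<xi>"] h0 profile_basic(6)[OF P] by simp
    qed
    thus False using x0 by simp
  qed
qed

lemma profile_pos:
  assumes P: "dec_profile m \<mu> f um 0 s U"
  shows "0 < U \<xi>"
proof -
  have RH: "s = (f 0 - f um) / (0 - um)" by (rule profile_basic(1)[OF P])
  have g0: "gg s 0 = 0" by (rule gg_zero_RH[OF RH])
  obtain L \<delta> where L: "L > 0" "\<delta> > 0" and Lb: "\<And>u. \<bar>u - 0\<bar> < \<delta> \<Longrightarrow> \<bar>gg s u - gg s 0\<bar> \<le> L * \<bar>u - 0\<bar>"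
    using local_lip[OF gg_der] by blast
  obtain a where a: "\<forall>\<xi>\<le>a. U \<xi> > um / 2" using profile_range(2)[OF P, of "um/2"] um0 by auto
  have "U \<xi> \<noteq> 0"
  proof (rule no_touch_left[where U = U and U' = "deriv U" and \<delta> = "min \<delta> 1" and L = "L / (\<mu> * m)" and a = a and c = 0])
    show "(U has_real_derivative deriv U \<xi>) (at \<xi>)" for \<xi> by (rule profile_basic(5)[OF P])
    show "min \<delta> 1 > 0" using L by simp
    show "U \<xi> \<noteq> 0" if "\<xi> \<le> a" for \<xi> using a that um0 by force
    fix \<xi> assume b: "\<bar>U \<xi> - 0\<bar> < min \<delta> 1"
    show "\<bar>deriv U \<xi>\<bar> \<le> L / (\<mu> * m) * \<bar>U \<xi> - 0\<bar>"
    proof (cases "U \<xi> = 0")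
      case True
      have "deriv U \<xi> = 0"
      proof (rule DERIV_local_min[OF profile_basic(5)[OF P], of 1])
        show "\<forall>y. \<bar>\<xi> - y\<bar> < 1 \<longrightarrow> U \<xi> \<le> U y" using True profile_basic(2)[OF P] by simp
      qed simp
      thus ?thesis using True by simp
    next
      case False
      hence pos: "U \<xi> > 0" using profile_basic(2)[OF P, of \<xi>] by simp
      have "\<bar>gg s (U \<xi>)\<bar> \<le> L * U \<xi>" using Lb[of "U \<xi>"] b g0 pos by simp
      moreover have "U \<xi> powr (1 - m) \<le> 1" using b m1 pos by (intro powr_le1) auto
      moreover have "U \<xi> powr (1 - m) \<ge> 0" by simp
      ultimately have "\<bar>gg s (U \<xi>)\<bar> * U \<xi> powr (1 - m) \<le> L * U \<xi>"
        by (metis abs_ge_zero mult.right_neutral mult_mono order_trans)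
      hence "\<bar>hh s (U \<xi>)\<bar> \<le> L * U \<xi> / (\<mu> * m)"
        unfolding hh_def using mu m0 by (simp add: abs_mult divide_right_mono)
      thus ?thesis using profile_basic(6)[OF P pos] pos by simp
    qed
  qed
  thus ?thesis using profile_basic(2)[OF P, of \<xi>] by simp
qed

lemma profile_lt:
  assumes P: "dec_profile m \<mu> f um 0 s U"
  shows "U \<xi> < um"
proof -
  obtain L \<delta> where L: "L > 0" "\<delta> > 0" and Lb: "\<And>u. \<bar>u - um\<bar> < \<delta> \<Longrightarrow> \<bar>gg s u - gg s um\<bar> \<le> L * \<bar>u - um\<bar>"
    using local_lip[OF gg_der] by blast
  obtain b where b: "\<forall>\<xi>\<ge>b. U \<xi> < um / 2" using profile_range(3)[OF P, of "um/2"] um0 by auto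
  have "U \<xi> \<noteq> um"
  proof (rule no_touch_right[where U = U and U' = "deriv U" and \<delta> = "min \<delta> (um/2)" and L = "L * um powr (1 - m) / (\<mu> * m)" and b = b and c = um])
    show "(U has_real_derivative deriv U \<xi>) (at \<xi>)" for \<xi> by (rule profile_basic(5)[OF P])
    show "min \<delta> (um/2) > 0" using L um0 by simp
    show "U \<xi> \<noteq> um" if "\<xi> \<ge> b" for \<xi> using b that um0 by force
    fix \<xi> assume bd: "\<bar>U \<xi> - um\<bar> < min \<delta> (um/2)"
    have pos: "U \<xi> > 0" by (rule profile_pos[OF P])
    have "\<bar>gg s (U \<xi>)\<bar> \<le> L * \<bar>U \<xi> - um\<bar>" using Lb[of "U \<xi>"] bd by simp
    moreover have "U \<xi> powr (1 - m) \<le> um powr (1 - m)" using pos m1 profile_basic(3)[OF P] by (intro powr_mono2) auto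
    moreover have "U \<xi> powr (1 - m) \<ge> 0" by simp
    ultimately have "\<bar>gg s (U \<xi>)\<bar> * U \<xi> powr (1 - m) \<le> L * \<bar>U \<xi> - um\<bar> * um powr (1 - m)"
      by (intro mult_mono) auto
    hence "\<bar>hh s (U \<xi>)\<bar> \<le> L * \<bar>U \<xi> - um\<bar> * um powr (1 - m) / (\<mu> * m)"
      unfolding hh_def using mu m0 by (simp add: abs_mult divide_right_mono)
    thus "\<bar>deriv U \<xi>\<bar> \<le> L * um powr (1 - m) / (\<mu> * m) * \<bar>U \<xi> - um\<bar>"
      using profile_basic(6)[OF P pos] by (simp add: algebra_simps)
  qed
  thus ?thesis using profile_basic(3)[OF P, of \<xi>] by simp
qed

lemma profile_ode:
  assumes P: "dec_profile m \<mu> f um 0 s U"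
  shows "0 < U \<xi>" "U \<xi> < um" "(U has_real_derivative hh s (U \<xi>)) (at \<xi>)" "hh s (U \<xi>) < 0"
    "deriv U \<xi> = hh s (U \<xi>)"
proof -
  show p: "0 < U \<xi>" by (rule profile_pos[OF P])
  show q: "U \<xi> < um" by (rule profile_lt[OF P])
  show "deriv U \<xi> = hh s (U \<xi>)" using profile_basic(6)[OF P p] .
  thus "(U has_real_derivative hh s (U \<xi>)) (at \<xi>)" using profile_basic(5)[OF P] by metis
  show "hh s (U \<xi>) < 0" using hh_neg[OF profile_gneg[OF P p q] p] .
qed

end

locale tw2 = tw +
  fixes s :: real
  assumes RH: "s = (f 0 - f um) / (0 - um)"
    and gneg: "\<And>u. 0 < u \<Longrightarrow> u < um \<Longrightarrow> gg s u < 0"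
begin

lemma g0: "gg s 0 = 0" by (rule gg_zero_RH[OF RH])

lemma hneg: "0 < u \<Longrightarrow> u < um \<Longrightarrow> hh s u < 0"
  using hh_neg gneg by blast

definition Phi :: "real \<Rightarrow> real" where "Phi u = (LBINT y=um/2..u. 1 / hh s y)"

lemma Phi_der:
  assumes u: "0 < u" "u < um"
  shows "(Phi has_real_derivative 1 / hh s u) (at u)"
proof -
  define a where "a = min (u/2) (um/2)"
  define b where "b = max ((u + um)/2) (um/2)"
  have ab: "0 < a" "a < u" "u < b" "b < um" "a \<le> um/2" "um/2 \<le> b"
    using u um0 unfolding a_def b_def by auto
  have "continuous_on {a..b} (\<lambda>y. 1 / hh s y)"
  proof (intro continuous_at_imp_continuous_on ballI)
    fix y assume y: "y \<in> {a..b}"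
    hence "0 < y" "y < um" using ab by auto
    thus "isCont (\<lambda>y. 1 / hh s y) y"
      using hh_cont hneg by (intro continuous_intros) (auto simp: order_less_imp_not_eq)
  qed
  from interval_integral_FTC2[OF ab(5,6) this, of u]
  have "((\<lambda>x. LBINT y=um/2..x. 1 / hh s y) has_vector_derivative 1 / hh s u) (at u within {a..b})"
    using ab by simp
  moreover have "at u within {a..b} = at u"
    using ab by (intro at_within_interior) simp
  ultimately show ?thesis
    unfolding Phi_def[abs_def] by (simp add: has_real_derivative_iff_has_vector_derivative)
qed

lemma Phi_cont: "0 < u \<Longrightarrow> u < um \<Longrightarrow> isCont Phi u"
  using Phi_der DERIV_isCont by blast

lemma Phi_strict:
  assumes "0 < x" "x < y" "y < um"
  shows "Phi y < Phi x"
proof (rule DERIV_neg_imp_decreasing[OF assms(2)])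
  fix t assume "x \<le> t" "t \<le> y"
  hence t: "0 < t" "t < um" using assms by auto
  thus "\<exists>d. (Phi has_real_derivative d) (at t) \<and> d < 0"
    using Phi_der[OF t] hneg[OF t] by (intro exI[of _ "1 / hh s t"]) simp
qed

lemma Phi_inj: "0 < x \<Longrightarrow> x < um \<Longrightarrow> 0 < y \<Longrightarrow> y < um \<Longrightarrow> Phi x = Phi y \<Longrightarrow> x = y"
  by (metis Phi_strict linorder_neqE_linordered_idom order_less_irrefl)

lemma Phi_large: "\<exists>u. 0 < u \<and> u < um \<and> Phi u > M"
proof -
  obtain L \<delta> where L: "L > 0" "\<delta> > 0" and Lb: "\<And>u. \<bar>u - 0\<bar> < \<delta> \<Longrightarrow> \<bar>gg s u - gg s 0\<bar> \<le> L * \<bar>u - 0\<bar>"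
    using local_lip[OF gg_der] by blast
  define L' where "L' = L / (\<mu> * m)"
  have L': "L' > 0" using L mu m0 by (simp add: L'_def)
  define d where "d = min (\<delta>/2) (min 1 (um/2))"
  have d: "0 < d" "d < \<delta>" "d \<le> 1" "d < um" using L um0 by (auto simp: d_def)
  have hb: "- hh s u \<le> L' * u" if u: "0 < u" "u \<le> d" for u
  proof -
    have "\<bar>gg s u\<bar> \<le> L * u" using Lb[of u] u d g0 by simp
    moreover have "u powr (1 - m) \<le> 1" using u d m1 by (intro powr_le1) auto
    moreover have "u powr (1 - m) \<ge> 0" by simp
    ultimately have "\<bar>gg s u\<bar> * u powr (1 - m) \<le> L * u"
      by (metis abs_ge_zero mult.right_neutral mult_mono order_trans)
    hence "\<bar>hh s u\<bar> \<le> L * u / (\<mu> * m)"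
      unfolding hh_def using mu m0 by (simp add: abs_mult divide_right_mono)
    thus ?thesis unfolding L'_def by simp
  qed
  define Psi where "Psi = (\<lambda>u. Phi u + ln u / L')"
  have Psi_mono: "Psi d \<le> Psi u" if u: "0 < u" "u \<le> d" for u
  proof (rule DERIV_nonpos_imp_nonincreasing[OF u(2)])
    fix t assume t: "u \<le> t" "t \<le> d"
    hence t0: "0 < t" "t < um" using u d by auto
    have "(Psi has_real_derivative 1 / hh s t + inverse t / L') (at t)"
      unfolding Psi_def using Phi_der[OF t0] t0 L' by (auto intro!: derivative_eq_intros simp: field_simps)
    moreover have "1 / hh s t + inverse t / L' \<le> 0"
    proof -
      have hn: "hh s t < 0" using hneg[OF t0] .
      have "- hh s t \<le> L' * t" using hb t t0 by simp
      hence "1 / (L' * t) \<le> 1 / (- hh s t)" using hn L' t0 by (intro divide_left_mono) (auto intro!: mult_pos_neg)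
      moreover have "1 / hh s t = - (1 / (- hh s t))" by simp
      moreover have "inverse t / L' = 1 / (L' * t)" by (simp add: field_simps)
      ultimately show ?thesis by linarith
    qed
    ultimately show "\<exists>y. (Psi has_real_derivative y) (at t) \<and> y \<le> 0" by blast
  qed
  define u where "u = min d (exp (L' * (Psi d - M - 1)))"
  have u: "0 < u" "u \<le> d" using d by (auto simp: u_def)
  have "ln u \<le> L' * (Psi d - M - 1)"
    using u by (metis exp_le_cancel_iff exp_ln min.cobounded2 u_def)
  hence "ln u / L' \<le> Psi d - M - 1" using L' by (simp add: divide_le_eq mult.commute)
  moreover have "Psi d \<le> Phi u + ln u / L'" using Psi_mono[OF u] by (simp add: Psi_def)
  ultimately have "Phi u > M" by linarith
  thus ?thesis using u d by (intro exI[of _ u]) auto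
qed

lemma Phi_small: "\<exists>u. 0 < u \<and> u < um \<and> Phi u < M"
proof -
  obtain L \<delta> where L: "L > 0" "\<delta> > 0" and Lb: "\<And>u. \<bar>u - um\<bar> < \<delta> \<Longrightarrow> \<bar>gg s u - gg s um\<bar> \<le> L * \<bar>u - um\<bar>"
    using local_lip[OF gg_der] by blast
  define L' where "L' = L * um powr (1 - m) / (\<mu> * m)"
  have L': "L' > 0" using L mu m0 um0 by (simp add: L'_def)
  define d where "d = min (\<delta>/2) (um/2)"
  have d: "0 < d" "d < \<delta>" "d < um" using L um0 by (auto simp: d_def)
  have hb: "- hh s u \<le> L' * (um - u)" if u: "um - d \<le> u" "u < um" for u
  proof -
    have "\<bar>gg s u\<bar> \<le> L * (um - u)" using Lb[of u] u d by simp
    moreover have "u powr (1 - m) \<le> um powr (1 - m)" using u d m1 by (intro powr_mono2) auto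
    moreover have "u powr (1 - m) \<ge> 0" by simp
    ultimately have "\<bar>gg s u\<bar> * u powr (1 - m) \<le> L * (um - u) * um powr (1 - m)"
      by (intro mult_mono) auto
    hence "\<bar>hh s u\<bar> \<le> L * (um - u) * um powr (1 - m) / (\<mu> * m)"
      unfolding hh_def using mu m0 by (simp add: abs_mult divide_right_mono)
    thus ?thesis unfolding L'_def by (simp add: algebra_simps)
  qed
  define Psi where "Psi = (\<lambda>u. Phi u - ln (um - u) / L')"
  have Psi_mono: "Psi u \<le> Psi (um - d)" if u: "um - d \<le> u" "u < um" for u
  proof (rule DERIV_nonpos_imp_nonincreasing[OF u(1)])
    fix t assume t: "um - d \<le> t" "t \<le> u"
    hence t0: "0 < t" "t < um" using u d by auto
    have "(Psi has_real_derivative 1 / hh s t - inverse (um - t) * (0 - 1) / L') (at t)"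
      unfolding Psi_def using Phi_der[OF t0] t0 L' by (auto intro!: derivative_eq_intros simp: field_simps)
    moreover have "1 / hh s t - inverse (um - t) * (0 - 1) / L' \<le> 0"
    proof -
      have hn: "hh s t < 0" using hneg[OF t0] .
      have "- hh s t \<le> L' * (um - t)" using hb t t0 by simp
      hence "1 / (L' * (um - t)) \<le> 1 / (- hh s t)" using hn L' t0 by (intro divide_left_mono) (auto intro!: mult_pos_neg)
      thus ?thesis using hn L' t0 by (simp add: field_simps)
    qed
    ultimately show "\<exists>y. (Psi has_real_derivative y) (at t) \<and> y \<le> 0" by blast
  qed
  define v where "v = min d (exp (L' * (M - 1 - Psi (um - d))))"
  have v: "0 < v" "v \<le> d" using d by (auto simp: v_def)
  have "ln v \<le> L' * (M - 1 - Psi (um - d))"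
    using v by (metis exp_le_cancel_iff exp_ln min.cobounded2 v_def)
  hence "ln v / L' \<le> M - 1 - Psi (um - d)" using L' by (simp add: divide_le_eq mult.commute)
  moreover have "Psi (um - v) \<le> Psi (um - d)" using Psi_mono[of "um - v"] v by simp
  ultimately have "Phi (um - v) < M" unfolding Psi_def by simp
  thus ?thesis using v d by (intro exI[of _ "um - v"]) auto
qed

end

context tw2 begin

lemma Phi_surj: "\<exists>u. 0 < u \<and> u < um \<and> Phi u = \<xi>"
proof -
  obtain u1 where u1: "0 < u1" "u1 < um" "Phi u1 > \<xi>" using Phi_large by blast
  obtain u2 where u2: "0 < u2" "u2 < um" "Phi u2 < \<xi>" using Phi_small by blast
  have "u1 < u2"
  proof (rule ccontr)
    assume "\<not> u1 < u2"
    hence "u2 = u1 \<or> u2 < u1" by auto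
    thus False using Phi_strict[of u2 u1] u1 u2 by auto
  qed
  moreover have "\<forall>x. u1 \<le> x \<and> x \<le> u2 \<longrightarrow> isCont Phi x" using u1 u2 Phi_cont by auto
  ultimately obtain u where "u1 \<le> u" "u \<le> u2" "Phi u = \<xi>"
    using IVT2[of Phi u2 \<xi> u1] u1 u2 by auto
  thus ?thesis using u1 u2 by (intro exI[of _ u]) auto
qed

definition Uc :: "real \<Rightarrow> real" where "Uc \<xi> = (THE u. 0 < u \<and> u < um \<and> Phi u = \<xi>)"

lemma Uc_props: "0 < Uc \<xi>" "Uc \<xi> < um" "Phi (Uc \<xi>) = \<xi>"
proof -
  have "\<exists>!u. 0 < u \<and> u < um \<and> Phi u = \<xi>"
    using Phi_surj Phi_inj by blast
  hence "0 < Uc \<xi> \<and> Uc \<xi> < um \<and> Phi (Uc \<xi>) = \<xi>"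
    unfolding Uc_def by (rule theI')
  thus "0 < Uc \<xi>" "Uc \<xi> < um" "Phi (Uc \<xi>) = \<xi>" by auto
qed

lemma Uc_Phi: "0 < u \<Longrightarrow> u < um \<Longrightarrow> Uc (Phi u) = u"
  using Uc_props Phi_inj by metis

lemma Uc_cont: "isCont Uc \<xi>"
proof -
  define x where "x = Uc \<xi>"
  define d where "d = min (x/2) ((um - x)/2)"
  have x: "0 < x" "x < um" using Uc_props x_def by auto
  have d: "0 < d" using x by (simp add: d_def)
  have zz: "0 < z \<and> z < um" if "\<bar>z - x\<bar> \<le> d" for z
  proof -
    have a1: "z - x \<le> d" "x - z \<le> d" using that by (auto simp: abs_le_iff)
    have a2: "d \<le> x/2" "d \<le> (um - x)/2" unfolding d_def by (auto simp: min_def)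
    have "0 < z" using a1 a2 x by linarith
    moreover have "z < um" using a1 a2 x by argo
    ultimately show ?thesis by simp
  qed
  have "isCont Uc (Phi x)"
    by (rule isCont_inverse_function[OF d]) (use zz Uc_Phi Phi_cont in auto)
  thus ?thesis using Uc_props(3) x_def by simp
qed

lemma Uc_der: "(Uc has_real_derivative hh s (Uc \<xi>)) (at \<xi>)"
proof -
  have pos: "0 < Uc \<xi>" "Uc \<xi> < um" using Uc_props by auto
  have "(Uc has_real_derivative inverse (1 / hh s (Uc \<xi>))) (at \<xi>)"
  proof (rule DERIV_inverse_function[where a = "\<xi> - 1" and b = "\<xi> + 1"])
    show "(Phi has_real_derivative 1 / hh s (Uc \<xi>)) (at (Uc \<xi>))" using Phi_der[OF pos] .
    show "1 / hh s (Uc \<xi>) \<noteq> 0" using hneg[OF pos] by simp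
    show "Phi (Uc y) = y" for y using Uc_props(3) .
  qed (auto intro: Uc_cont)
  thus ?thesis by simp
qed

lemma Uc_profile: "dec_profile m \<mu> f um 0 s Uc"
proof -
  have U0: "0 < Uc x" "Uc x < um" for x using Uc_props by auto
  have hU: "(Uc has_real_derivative hh s (Uc x)) (at x)" for x by (rule Uc_der)
  have am: "antimono Uc"
  proof (rule antimonoI, rule ccontr)
    fix x y :: real assume xy: "x \<le> y" and "\<not> Uc y \<le> Uc x"
    hence "Phi (Uc y) < Phi (Uc x)" using U0 by (intro Phi_strict) auto
    thus False using xy Uc_props(3) by simp
  qed
  have hP: "((\<lambda>x. Uc x powr m) has_real_derivative gg s (Uc x) / \<mu>) (at x)" for x
  proof -
    have "((\<lambda>x. Uc x powr m) has_real_derivative m * Uc x powr (m - 1) * hh s (Uc x)) (at x)"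
      using DERIV_fun_powr[OF hU U0(1), of m] by simp
    moreover have "m * Uc x powr (m - 1) * hh s (Uc x) = gg s (Uc x) / \<mu> * (Uc x powr (m - 1) * Uc x powr (1 - m))"
      unfolding hh_def using m0 mu by (simp add: field_simps)
    moreover have "Uc x powr (m - 1) * Uc x powr (1 - m) = 1"
      using U0(1)[of x] by (simp add: powr_add[symmetric])
    ultimately show ?thesis by simp
  qed
  have dP: "deriv (\<lambda>x. Uc x powr m) = (\<lambda>x. gg s (Uc x) / \<mu>)"
    using hP DERIV_imp_deriv by blast
  have hD: "((\<lambda>x. gg s (Uc x) / \<mu>) has_real_derivative (deriv f (Uc x) - s) * hh s (Uc x) / \<mu>) (at x)" for x
    using DERIV_chain2[OF gg_der hU] mu by (auto intro!: derivative_eq_intros)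
  have dfU: "deriv (\<lambda>x. f (Uc x)) x = deriv f (Uc x) * hh s (Uc x)" for x
    using DERIV_chain2[OF f_der hU] by (rule DERIV_imp_deriv)
  have lb: "(Uc \<longlongrightarrow> um) at_bot"
  proof (rule order_tendstoI)
    fix a assume a: "a < um"
    show "eventually (\<lambda>x. a < Uc x) at_bot"
    proof (cases "a \<le> 0")
      case True thus ?thesis using U0 by (intro always_eventually allI) (meson order_le_less_trans)
    next
      case False
      hence a0: "0 < a" by simp
      show ?thesis unfolding eventually_at_bot_linorder
      proof (intro exI[of _ "Phi a - 1"] allI impI, rule ccontr)
        fix x assume x: "x \<le> Phi a - 1" and "\<not> a < Uc x"
        hence "Uc x \<le> a" by simp
        hence "Phi a \<le> Phi (Uc x)" using Phi_strict[of "Uc x" a] U0[of x] a0 a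
          by (cases "Uc x = a") auto
        thus False using x Uc_props(3) by simp
      qed
    qed
  next
    fix a :: real assume "a > um"
    thus "eventually (\<lambda>x. Uc x < a) at_bot" using U0 by (intro always_eventually allI) (meson order_less_trans)
  qed
  have lt: "(Uc \<longlongrightarrow> 0) at_top"
  proof (rule order_tendstoI)
    fix a :: real assume a: "a > 0"
    show "eventually (\<lambda>x. Uc x < a) at_top"
    proof (cases "a \<ge> um")
      case True thus ?thesis using U0 by (intro always_eventually allI) (meson order_less_le_trans)
    next
      case False
      hence a0: "a < um" by simp
      show ?thesis unfolding eventually_at_top_linorder
      proof (intro exI[of _ "Phi a + 1"] allI impI, rule ccontr)
        fix x assume x: "x \<ge> Phi a + 1" and "\<not> Uc x < a"
        hence "a \<le> Uc x" by simp
        hence "Phi (Uc x) \<le> Phi a" using Phi_strict[of a "Uc x"] U0[of x] a0 a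
          by (cases "Uc x = a") auto
        thus False using x Uc_props(3) by simp
      qed
    qed
  next
    fix a :: real assume "a < 0"
    thus "eventually (\<lambda>x. a < Uc x) at_top" using U0 by (intro always_eventually allI) (meson order_less_trans)
  qed
  have d1: "Uc differentiable at \<xi>" for \<xi> using hU real_differentiable_def by blast
  have d2: "(\<lambda>x. Uc x powr m) differentiable at \<xi>" for \<xi> using hP real_differentiable_def by blast
  have d3: "deriv (\<lambda>x. Uc x powr m) differentiable at \<xi>" for \<xi>
    unfolding dP using hD real_differentiable_def by blast
  have d4: "- s * deriv Uc \<xi> + deriv (\<lambda>x. f (Uc x)) \<xi> = \<mu> * deriv (deriv (\<lambda>x. Uc x powr m)) \<xi>" for \<xi>
  proof -
    have "deriv (deriv (\<lambda>x. Uc x powr m)) \<xi> = (deriv f (Uc \<xi>) - s) * hh s (Uc \<xi>) / \<mu>"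
      unfolding dP using hD by (rule DERIV_imp_deriv)
    thus ?thesis
      using DERIV_imp_deriv[OF hU] dfU[of \<xi>] mu by (simp add: field_simps)
  qed
  show ?thesis unfolding dec_profile_def using am d1 d2 d3 d4 lb lt by blast
qed

lemma profile_unique:
  assumes P: "dec_profile m \<mu> f um 0 s U" and Q: "dec_profile m \<mu> f um 0 s V"
  shows "\<exists>c. \<forall>\<xi>. V \<xi> = U (\<xi> + c)"
proof -
  have const: "\<exists>k. \<forall>\<xi>. Phi (W \<xi>) = \<xi> + k" if W: "dec_profile m \<mu> f um 0 s W" for W
  proof -
    have "\<forall>\<xi>. ((\<lambda>\<xi>. Phi (W \<xi>) - \<xi>) has_real_derivative 0) (at \<xi>)"
    proof
      fix \<xi>
      have w: "0 < W \<xi>" "W \<xi> < um" using profile_ode(1,2)[OF W] by auto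
      have "((\<lambda>\<xi>. Phi (W \<xi>) - \<xi>) has_real_derivative 1 / hh s (W \<xi>) * hh s (W \<xi>) - 1) (at \<xi>)"
        by (rule DERIV_diff[OF DERIV_chain2[OF Phi_der[OF w] profile_ode(3)[OF W]] DERIV_ident])
      moreover have "1 / hh s (W \<xi>) * hh s (W \<xi>) - 1 = 0" using hneg[OF w] by simp
      ultimately show "((\<lambda>\<xi>. Phi (W \<xi>) - \<xi>) has_real_derivative 0) (at \<xi>)" by metis
    qed
    note c = DERIV_isconst_all[OF this]
    have "Phi (W \<xi>) = \<xi> + Phi (W 0)" for \<xi>
    proof -
      have "Phi (W \<xi>) - \<xi> = Phi (W 0) - 0" using c[of \<xi> 0] by simp
      thus ?thesis by linarith
    qed
    thus ?thesis by blast
  qed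
  obtain k1 where k1: "\<And>\<xi>. Phi (U \<xi>) = \<xi> + k1" using const[OF P] by blast
  obtain k2 where k2: "\<And>\<xi>. Phi (V \<xi>) = \<xi> + k2" using const[OF Q] by blast
  show ?thesis
  proof (intro exI allI)
    fix \<xi>
    have "Phi (V \<xi>) = Phi (U (\<xi> + (k2 - k1)))" using k1 k2 by simp
    thus "V \<xi> = U (\<xi> + (k2 - k1))"
      using Phi_inj[of "V \<xi>" "U (\<xi> + (k2 - k1))"] profile_ode(1,2)[OF P, of "\<xi> + (k2 - k1)"]
        profile_ode(1,2)[OF Q, of \<xi>] by simp
  qed
qed

end

lemma decay_top:
  fixes U D :: "real \<Rightarrow> real"
  assumes der: "\<And>\<xi>. (U has_real_derivative D \<xi>) (at \<xi>)"
    and pos: "\<And>\<xi>. 0 < U \<xi>" and lim: "(U \<longlongrightarrow> 0) at_top"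
    and q: "q > 1" and r: "r = q - 1" and c: "0 < c1" "0 < c2" and \<delta>: "\<delta> > 0"
    and bnd: "\<And>\<xi>. U \<xi> < \<delta> \<Longrightarrow> c1 * U \<xi> powr q \<le> - D \<xi> \<and> - D \<xi> \<le> c2 * U \<xi> powr q"
  shows "asym_equiv (\<lambda>\<xi>. \<bar>D \<xi>\<bar> powr (1 / q)) (\<lambda>\<xi>. \<bar>U \<xi> - 0\<bar>) at_top"
    and "asym_equiv (\<lambda>\<xi>. \<bar>U \<xi> - 0\<bar>) (\<lambda>\<xi>. \<bar>\<xi>\<bar> powr (- 1 / r)) at_top"
proof -
  have ev: "eventually (\<lambda>\<xi>. U \<xi> < \<delta>) at_top" using order_tendstoD(2)[OF lim \<delta>] .
  then obtain \<xi>1 where \<xi>1: "\<And>\<xi>. \<xi> \<ge> \<xi>1 \<Longrightarrow> U \<xi> < \<delta>" by (auto simp: eventually_at_top_linorder)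
  have q0: "q > 0" "1 / q > 0" using q by auto
  have pw: "(c * U \<xi> powr q) powr (1 / q) = c powr (1 / q) * U \<xi>" if "c > 0" for c \<xi>
    using that pos[of \<xi>] q0 by (simp add: powr_mult powr_powr)
  show "asym_equiv (\<lambda>\<xi>. \<bar>D \<xi>\<bar> powr (1 / q)) (\<lambda>\<xi>. \<bar>U \<xi> - 0\<bar>) at_top"
    unfolding asym_equiv_def
  proof (intro exI[of _ "max 1 (max (c2 powr (1 / q)) (1 / c1 powr (1 / q)))"] conjI)
    let ?C = "max 1 (max (c2 powr (1 / q)) (1 / c1 powr (1 / q)))"
    show "?C \<ge> 1" by simp
    show "eventually (\<lambda>\<xi>. \<bar>U \<xi> - 0\<bar> / ?C \<le> \<bar>D \<xi>\<bar> powr (1 / q) \<and> \<bar>D \<xi>\<bar> powr (1 / q) \<le> ?C * \<bar>U \<xi> - 0\<bar>) at_top"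
      using ev
    proof eventually_elim
      case (elim \<xi>)
      have b: "c1 * U \<xi> powr q \<le> \<bar>D \<xi>\<bar>" "\<bar>D \<xi>\<bar> \<le> c2 * U \<xi> powr q"
      proof -
        have "0 < c1 * U \<xi> powr q" using c pos[of \<xi>] by simp
        thus "c1 * U \<xi> powr q \<le> \<bar>D \<xi>\<bar>" "\<bar>D \<xi>\<bar> \<le> c2 * U \<xi> powr q" using bnd[OF elim] by auto
      qed
      have l: "c1 powr (1 / q) * U \<xi> \<le> \<bar>D \<xi>\<bar> powr (1 / q)"
        using powr_mono2[OF less_imp_le[OF q0(2)] _ b(1)] pw[OF c(1)] c pos[of \<xi>] by simp
      have u: "\<bar>D \<xi>\<bar> powr (1 / q) \<le> c2 powr (1 / q) * U \<xi>"
        using powr_mono2[OF less_imp_le[OF q0(2)] _ b(2)] pw[OF c(2)] by simp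
      have C1: "1 / ?C \<le> c1 powr (1 / q)"
      proof -
        have "1 / c1 powr (1 / q) \<le> ?C" by simp
        thus ?thesis using c by (simp add: divide_le_eq field_simps)
      qed
      have "\<bar>U \<xi> - 0\<bar> / ?C = (1 / ?C) * U \<xi>" using pos[of \<xi>] by simp
      also have "\<dots> \<le> c1 powr (1 / q) * U \<xi>" using C1 pos[of \<xi>] by (intro mult_right_mono) auto
      finally have 1: "\<bar>U \<xi> - 0\<bar> / ?C \<le> \<bar>D \<xi>\<bar> powr (1 / q)" using l by linarith
      have mm: "c2 powr (1 / q) * U \<xi> \<le> ?C * U \<xi>" using pos[of \<xi>] by (intro mult_right_mono) auto
      have 2: "\<bar>D \<xi>\<bar> powr (1 / q) \<le> ?C * \<bar>U \<xi> - 0\<bar>" using order_trans[OF u mm] pos[of \<xi>] by simp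
      show ?case using 1 2 by simp
    qed
  qed
  define \<xi>0 where "\<xi>0 = max \<xi>1 1"
  have \<xi>0: "\<xi>0 \<ge> 1" "\<And>\<xi>. \<xi> \<ge> \<xi>0 \<Longrightarrow> U \<xi> < \<delta>" using \<xi>1 by (auto simp: \<xi>0_def)
  define Y where "Y = (\<lambda>\<xi>. U \<xi> powr (1 - q))"
  define A1 where "A1 = (q - 1) * c1"
  define A2 where "A2 = (q - 1) * c2"
  have A: "A1 > 0" "A2 > 0" using q c by (auto simp: A1_def A2_def)
  have Yder: "(Y has_real_derivative (q - 1) * (U \<xi> powr (- q) * - D \<xi>)) (at \<xi>)" for \<xi>
  proof -
    have "(Y has_real_derivative (1 - q) * U \<xi> powr (1 - q - 1) * D \<xi>) (at \<xi>)"
      unfolding Y_def using DERIV_fun_powr[OF der pos, of "1 - q"] by simp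
    thus ?thesis by (simp add: algebra_simps)
  qed
  have Yb: "A1 \<le> (q - 1) * (U \<xi> powr (- q) * - D \<xi>) \<and> (q - 1) * (U \<xi> powr (- q) * - D \<xi>) \<le> A2"
    if "\<xi> \<ge> \<xi>0" for \<xi>
  proof -
    have b: "c1 * U \<xi> powr q \<le> - D \<xi>" "- D \<xi> \<le> c2 * U \<xi> powr q" using bnd \<xi>0(2)[OF that] by auto
    have p: "U \<xi> powr (- q) > 0" using pos[of \<xi>] by simp
    have e: "U \<xi> powr (- q) * U \<xi> powr q = 1" using pos[of \<xi>] by (simp add: powr_add[symmetric])
    have "c1 = U \<xi> powr (- q) * (c1 * U \<xi> powr q)" using e by (simp add: algebra_simps)
    also have "\<dots> \<le> U \<xi> powr (- q) * - D \<xi>" using b(1) p by (intro mult_left_mono) auto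
    finally have l: "c1 \<le> U \<xi> powr (- q) * - D \<xi>" .
    have "U \<xi> powr (- q) * - D \<xi> \<le> U \<xi> powr (- q) * (c2 * U \<xi> powr q)" using b(2) p by (intro mult_left_mono) auto
    also have "\<dots> = c2" using e by (simp add: algebra_simps)
    finally have u: "U \<xi> powr (- q) * - D \<xi> \<le> c2" .
    have q1: "q - 1 \<ge> 0" using q by simp
    show ?thesis unfolding A1_def A2_def using mult_left_mono[OF l q1] mult_left_mono[OF u q1] by simp
  qed
  have Ylow: "Y \<xi> \<ge> Y \<xi>0 + A1 * (\<xi> - \<xi>0)" if "\<xi> \<ge> \<xi>0" for \<xi>
  proof -
    have "(\<lambda>t. Y t - A1 * t) \<xi>0 \<le> (\<lambda>t. Y t - A1 * t) \<xi>"
    proof (rule DERIV_nonneg_imp_nondecreasing[OF that])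
      fix t assume "\<xi>0 \<le> t" "t \<le> \<xi>"
      hence yb: "A1 \<le> (q - 1) * (U t powr (- q) * - D t) \<and> (q - 1) * (U t powr (- q) * - D t) \<le> A2" using Yb[of t] by simp
      have "((\<lambda>t. Y t - A1 * t) has_real_derivative (q - 1) * (U t powr (- q) * - D t) - A1 * 1) (at t)"
        by (rule DERIV_diff[OF Yder DERIV_cmult[OF DERIV_ident]])
      thus "\<exists>y. ((\<lambda>t. Y t - A1 * t) has_real_derivative y) (at t) \<and> y \<ge> 0"
        using yb by (intro exI[of _ "(q - 1) * (U t powr (- q) * - D t) - A1 * 1"]) auto
    qed
    thus ?thesis by (simp add: algebra_simps)
  qed
  have Yup: "Y \<xi> \<le> Y \<xi>0 + A2 * (\<xi> - \<xi>0)" if "\<xi> \<ge> \<xi>0" for \<xi>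
  proof -
    have "(\<lambda>t. Y t - A2 * t) \<xi>0 \<ge> (\<lambda>t. Y t - A2 * t) \<xi>"
    proof (rule DERIV_nonpos_imp_nonincreasing[OF that])
      fix t assume "\<xi>0 \<le> t" "t \<le> \<xi>"
      hence yb: "A1 \<le> (q - 1) * (U t powr (- q) * - D t) \<and> (q - 1) * (U t powr (- q) * - D t) \<le> A2" using Yb[of t] by simp
      have "((\<lambda>t. Y t - A2 * t) has_real_derivative (q - 1) * (U t powr (- q) * - D t) - A2 * 1) (at t)"
        by (rule DERIV_diff[OF Yder DERIV_cmult[OF DERIV_ident]])
      thus "\<exists>y. ((\<lambda>t. Y t - A2 * t) has_real_derivative y) (at t) \<and> y \<le> 0"
        using yb by (intro exI[of _ "(q - 1) * (U t powr (- q) * - D t) - A2 * 1"]) auto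
    qed
    thus ?thesis by (simp add: algebra_simps)
  qed
  have Ypos: "Y \<xi> > 0" for \<xi> using pos[of \<xi>] by (simp add: Y_def)
  define a where "a = A1 / 2"
  define b where "b = Y \<xi>0 + A2"
  have ab: "a > 0" "b > 0" using A Ypos[of \<xi>0] by (auto simp: a_def b_def)
  have Yab: "a * \<xi> \<le> Y \<xi> \<and> Y \<xi> \<le> b * \<xi>" if "\<xi> \<ge> 2 * \<xi>0" for \<xi>
  proof
    have x: "\<xi> \<ge> \<xi>0" "\<xi> \<ge> 1" using that \<xi>0 by auto
    have "A1 * \<xi>0 \<le> A1 * (\<xi> / 2)" using that A by (intro mult_left_mono) auto
    hence "a * \<xi> \<le> A1 * (\<xi> - \<xi>0)" unfolding a_def by (simp add: algebra_simps)
    also have "\<dots> \<le> Y \<xi>" using Ylow[OF x(1)] Ypos[of \<xi>0] by linarith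
    finally show "a * \<xi> \<le> Y \<xi>" .
    have "Y \<xi> \<le> Y \<xi>0 + A2 * \<xi>" using Yup[OF x(1)] A \<xi>0 by (smt (verit) mult_left_mono)
    also have "\<dots> \<le> Y \<xi>0 * \<xi> + A2 * \<xi>" using mult_left_mono[OF x(2) less_imp_le[OF Ypos[of \<xi>0]]] by simp
    finally show "Y \<xi> \<le> b * \<xi>" unfolding b_def by (simp add: algebra_simps)
  qed
  have r0: "- 1 / r < 0" using q r by simp
  have UY: "U \<xi> = Y \<xi> powr (- 1 / r)" for \<xi>
  proof -
    have "(1 - q) * (- 1 / r) = 1" using q r by (simp add: field_simps)
    thus ?thesis unfolding Y_def using pos[of \<xi>] by (simp add: powr_powr)
  qed
  show "asym_equiv (\<lambda>\<xi>. \<bar>U \<xi> - 0\<bar>) (\<lambda>\<xi>. \<bar>\<xi>\<bar> powr (- 1 / r)) at_top"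
    unfolding asym_equiv_def
  proof (intro exI[of _ "max 1 (max (a powr (- 1 / r)) (1 / b powr (- 1 / r)))"] conjI)
    let ?C = "max 1 (max (a powr (- 1 / r)) (1 / b powr (- 1 / r)))"
    show "?C \<ge> 1" by simp
    show "eventually (\<lambda>\<xi>. \<bar>\<xi>\<bar> powr (- 1 / r) / ?C \<le> \<bar>U \<xi> - 0\<bar> \<and> \<bar>U \<xi> - 0\<bar> \<le> ?C * \<bar>\<xi>\<bar> powr (- 1 / r)) at_top"
      unfolding eventually_at_top_linorder
    proof (intro exI[of _ "2 * \<xi>0"] allI impI)
      fix \<xi> assume x: "\<xi> \<ge> 2 * \<xi>0"
      have xp: "\<xi> > 0" using x \<xi>0 by auto
      have y: "a * \<xi> \<le> Y \<xi>" "Y \<xi> \<le> b * \<xi>" using Yab[OF x] by auto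
      have l: "(b * \<xi>) powr (- 1 / r) \<le> U \<xi>"
        unfolding UY using powr_mono2'[OF less_imp_le[OF r0] Ypos y(2)] .
      have u: "U \<xi> \<le> (a * \<xi>) powr (- 1 / r)"
        unfolding UY using powr_mono2'[OF less_imp_le[OF r0] _ y(1)] ab xp by simp
      have l': "b powr (- 1 / r) * \<xi> powr (- 1 / r) \<le> U \<xi>" using l ab xp by (simp add: powr_mult)
      have u': "U \<xi> \<le> a powr (- 1 / r) * \<xi> powr (- 1 / r)" using u ab xp by (simp add: powr_mult)
      have C1: "1 / ?C \<le> b powr (- 1 / r)"
      proof -
        have "1 / b powr (- 1 / r) \<le> ?C" by simp
        thus ?thesis using ab by (simp add: divide_le_eq field_simps)
      qed
      have "\<bar>\<xi>\<bar> powr (- 1 / r) / ?C = (1 / ?C) * \<xi> powr (- 1 / r)" using xp by simp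
      also have "\<dots> \<le> b powr (- 1 / r) * \<xi> powr (- 1 / r)" using C1 by (intro mult_right_mono) auto
      finally have 1: "\<bar>\<xi>\<bar> powr (- 1 / r) / ?C \<le> \<bar>U \<xi> - 0\<bar>" using l' pos[of \<xi>] by simp
      have mm: "a powr (- 1 / r) * \<xi> powr (- 1 / r) \<le> ?C * \<xi> powr (- 1 / r)" by (intro mult_right_mono) auto
      have 2: "\<bar>U \<xi> - 0\<bar> \<le> ?C * \<bar>\<xi>\<bar> powr (- 1 / r)" using order_trans[OF u' mm] pos[of \<xi>] xp by simp
      show "\<bar>\<xi>\<bar> powr (- 1 / r) / ?C \<le> \<bar>U \<xi> - 0\<bar> \<and> \<bar>U \<xi> - 0\<bar> \<le> ?C * \<bar>\<xi>\<bar> powr (- 1 / r)"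
        using 1 2 by simp
    qed
  qed
qed

lemma decay_bot:
  fixes U D :: "real \<Rightarrow> real"
  assumes der: "\<And>\<xi>. (U has_real_derivative D \<xi>) (at \<xi>)"
    and ltu: "\<And>\<xi>. U \<xi> < um" and lim: "(U \<longlongrightarrow> um) at_bot"
    and lam: "lam > 0" and K: "K \<ge> 0" and \<delta>: "\<delta> > 0"
    and bnd: "\<And>\<xi>. um - U \<xi> < \<delta> \<Longrightarrow> \<bar>D \<xi> + lam * (um - U \<xi>)\<bar> \<le> K * (um - U \<xi>)\<^sup>2"
  shows "asym_equiv (\<lambda>\<xi>. \<bar>D \<xi>\<bar>) (\<lambda>\<xi>. \<bar>U \<xi> - um\<bar>) at_bot"
    and "asym_equiv (\<lambda>\<xi>. \<bar>U \<xi> - um\<bar>) (\<lambda>\<xi>. exp (- lam * \<bar>\<xi>\<bar>)) at_bot"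
proof -
  define V where "V = (\<lambda>\<xi>. um - U \<xi>)"
  have Vpos: "V \<xi> > 0" for \<xi> using ltu[of \<xi>] by (simp add: V_def)
  have Vder: "(V has_real_derivative - D \<xi>) (at \<xi>)" for \<xi>
    unfolding V_def using DERIV_diff[OF DERIV_const der[of \<xi>], of um] by simp
  define d where "d = min \<delta> (lam / (2 * (K + 1)))"
  have d: "d > 0" "d \<le> \<delta>" "K * d \<le> lam / 2"
  proof -
    show "d > 0" "d \<le> \<delta>" using \<delta> lam K by (auto simp: d_def)
    have "K * d \<le> K * (lam / (2 * (K + 1)))" using K by (intro mult_left_mono) (auto simp: d_def)
    also have "\<dots> = (K / (K + 1)) * (lam / 2)" using K by (simp add: field_simps)
    also have "\<dots> \<le> 1 * (lam / 2)" using K lam by (intro mult_right_mono) auto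
    finally show "K * d \<le> lam / 2" by simp
  qed
  have "eventually (\<lambda>\<xi>. um - d < U \<xi>) at_bot" using order_tendstoD(1)[OF lim] d by simp
  then obtain \<xi>1 where \<xi>1: "\<And>\<xi>. \<xi> \<le> \<xi>1 \<Longrightarrow> um - d < U \<xi>" by (auto simp: eventually_at_bot_linorder)
  define \<xi>0 where "\<xi>0 = min \<xi>1 0"
  have \<xi>0: "\<xi>0 \<le> 0" "\<And>\<xi>. \<xi> \<le> \<xi>0 \<Longrightarrow> V \<xi> < d" 
  proof -
    show "\<xi>0 \<le> 0" by (simp add: \<xi>0_def)
    fix \<xi> assume "\<xi> \<le> \<xi>0"
    hence "\<xi> \<le> \<xi>1" by (simp add: \<xi>0_def)
    from \<xi>1[OF this] show "V \<xi> < d" by (simp add: V_def)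
  qed
  have Vb: "\<bar>- D \<xi> - lam * V \<xi>\<bar> \<le> K * (V \<xi>)\<^sup>2" "lam / 2 * V \<xi> \<le> - D \<xi>" "- D \<xi> \<le> 3 * lam / 2 * V \<xi>"
    if "\<xi> \<le> \<xi>0" for \<xi>
  proof -
    have vd: "V \<xi> < d" using \<xi>0(2)[OF that] .
    have b: "\<bar>D \<xi> + lam * V \<xi>\<bar> \<le> K * (V \<xi>)\<^sup>2" using bnd[of \<xi>] vd d unfolding V_def by simp
    thus b': "\<bar>- D \<xi> - lam * V \<xi>\<bar> \<le> K * (V \<xi>)\<^sup>2" by (simp add: abs_minus_commute)
    have "K * (V \<xi>)\<^sup>2 = (K * V \<xi>) * V \<xi>" by (simp add: power2_eq_square)
    also have "\<dots> \<le> (K * d) * V \<xi>" using vd K Vpos[of \<xi>] by (intro mult_right_mono mult_left_mono) auto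
    also have "\<dots> \<le> lam / 2 * V \<xi>" using d Vpos[of \<xi>] by (intro mult_right_mono) auto
    finally have "K * (V \<xi>)\<^sup>2 \<le> lam / 2 * V \<xi>" .
    thus "lam / 2 * V \<xi> \<le> - D \<xi>" "- D \<xi> \<le> 3 * lam / 2 * V \<xi>" using b' by (auto simp: abs_le_iff)
  qed
  show "asym_equiv (\<lambda>\<xi>. \<bar>D \<xi>\<bar>) (\<lambda>\<xi>. \<bar>U \<xi> - um\<bar>) at_bot"
    unfolding asym_equiv_def
  proof (intro exI[of _ "max 1 (max (3 * lam / 2) (2 / lam))"] conjI)
    let ?C = "max 1 (max (3 * lam / 2) (2 / lam))"
    show "?C \<ge> 1" by simp
    show "eventually (\<lambda>\<xi>. \<bar>U \<xi> - um\<bar> / ?C \<le> \<bar>D \<xi>\<bar> \<and> \<bar>D \<xi>\<bar> \<le> ?C * \<bar>U \<xi> - um\<bar>) at_bot"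
      unfolding eventually_at_bot_linorder
    proof (intro exI[of _ \<xi>0] allI impI)
      fix \<xi> assume x: "\<xi> \<le> \<xi>0"
      have e: "\<bar>U \<xi> - um\<bar> = V \<xi>" using Vpos[of \<xi>] by (simp add: V_def)
      have v: "V \<xi> > 0" by (rule Vpos)
      have l: "lam / 2 * V \<xi> \<le> \<bar>D \<xi>\<bar>" "\<bar>D \<xi>\<bar> \<le> 3 * lam / 2 * V \<xi>" using Vb[OF x] lam v by auto
      have C1: "1 / ?C \<le> lam / 2"
      proof -
        have "2 / lam \<le> ?C" by simp
        hence "1 / ?C \<le> 1 / (2 / lam)" using lam by (intro divide_left_mono) auto
        moreover have "1 / (2 / lam) = lam / 2" by simp
        ultimately show ?thesis by (rule ord_le_eq_trans)
      qed
      have "V \<xi> / ?C = (1 / ?C) * V \<xi>" by simp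
      also have "\<dots> \<le> lam / 2 * V \<xi>" by (rule mult_right_mono[OF C1 less_imp_le[OF v]])
      finally have 1: "V \<xi> / ?C \<le> \<bar>D \<xi>\<bar>" using l by linarith
      have mm: "3 * lam / 2 * V \<xi> \<le> ?C * V \<xi>" using v by (intro mult_right_mono) auto
      have 2: "\<bar>D \<xi>\<bar> \<le> ?C * V \<xi>" using order_trans[OF l(2) mm] .
      show "\<bar>U \<xi> - um\<bar> / ?C \<le> \<bar>D \<xi>\<bar> \<and> \<bar>D \<xi>\<bar> \<le> ?C * \<bar>U \<xi> - um\<bar>" unfolding e using 1 2 by simp
    qed
  qed
  define Lg where "Lg = (\<lambda>\<xi>. ln (V \<xi>))"
  have Lgder: "(Lg has_real_derivative - D \<xi> / V \<xi>) (at \<xi>)" for \<xi>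
  proof -
    have "(Lg has_real_derivative inverse (V \<xi>) * - D \<xi>) (at \<xi>)"
      unfolding Lg_def by (rule DERIV_chain2[OF DERIV_ln[OF Vpos] Vder])
    thus ?thesis by (simp add: field_simps)
  qed
  have crude0: "(\<lambda>t. Lg t - lam / 2 * t) \<xi> \<le> (\<lambda>t. Lg t - lam / 2 * t) \<xi>0" if "\<xi> \<le> \<xi>0" for \<xi>
  proof (rule DERIV_nonneg_imp_nondecreasing[OF that])
    fix t assume t: "\<xi> \<le> t" "t \<le> \<xi>0"
    have "((\<lambda>t. Lg t - lam / 2 * t) has_real_derivative - D t / V t - lam / 2 * 1) (at t)"
      by (rule DERIV_diff[OF Lgder DERIV_cmult[OF DERIV_ident]])
    moreover have "- D t / V t - lam / 2 * 1 \<ge> 0"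
      using Vb(2)[of t] t Vpos[of t] by (simp add: field_simps)
    ultimately show "\<exists>y. ((\<lambda>t. Lg t - lam / 2 * t) has_real_derivative y) (at t) \<and> 0 \<le> y" by blast
  qed
  have crude: "Lg \<xi> - lam / 2 * \<xi> \<le> Lg \<xi>0 - lam / 2 * \<xi>0" if "\<xi> \<le> \<xi>0" for \<xi>
    using crude0[OF that] by simp
  define M where "M = V \<xi>0 * exp (- lam / 2 * \<xi>0)"
  have M: "M > 0" using Vpos[of \<xi>0] by (simp add: M_def)
  have Vup: "V \<xi> \<le> M * exp (lam / 2 * \<xi>)" if "\<xi> \<le> \<xi>0" for \<xi>
  proof -
    have "V \<xi> = exp (Lg \<xi>)" using Vpos[of \<xi>] by (simp add: Lg_def)
    also have "\<dots> \<le> exp (Lg \<xi>0 - lam / 2 * \<xi>0 + lam / 2 * \<xi>)" using crude[OF that] by simp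
    also have "\<dots> = exp (ln (V \<xi>0) + (- lam / 2 * \<xi>0) + lam / 2 * \<xi>)" by (simp add: Lg_def)
    also have "\<dots> = exp (ln (V \<xi>0)) * exp (- lam / 2 * \<xi>0) * exp (lam / 2 * \<xi>)" by (simp only: exp_add)
    also have "\<dots> = M * exp (lam / 2 * \<xi>)" unfolding M_def using Vpos[of \<xi>0] by simp
    finally show ?thesis .
  qed
  define F where "F = (\<lambda>\<xi>. Lg \<xi> - lam * \<xi>)"
  have Fder: "(F has_real_derivative - D \<xi> / V \<xi> - lam * 1) (at \<xi>)" for \<xi>
    unfolding F_def by (rule DERIV_diff[OF Lgder DERIV_cmult[OF DERIV_ident]])
  have Fb: "\<bar>- D \<xi> / V \<xi> - lam * 1\<bar> \<le> K * M * exp (lam / 2 * \<xi>)" if "\<xi> \<le> \<xi>0" for \<xi>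
  proof -
    have v: "V \<xi> > 0" by (rule Vpos)
    have "- D \<xi> / V \<xi> - lam * 1 = (- D \<xi> - lam * V \<xi>) / V \<xi>" using v by (simp add: field_simps)
    hence "\<bar>- D \<xi> / V \<xi> - lam * 1\<bar> = \<bar>- D \<xi> - lam * V \<xi>\<bar> / V \<xi>" using v by simp
    also have "\<dots> \<le> K * (V \<xi>)\<^sup>2 / V \<xi>" using Vb(1)[OF that] v by (intro divide_right_mono) auto
    also have "\<dots> = K * V \<xi>" using v by (simp add: power2_eq_square)
    also have "\<dots> \<le> K * (M * exp (lam / 2 * \<xi>))" using Vup[OF that] K by (intro mult_left_mono) auto
    finally show ?thesis by simp
  qed
  define E where "E = (\<lambda>\<xi>. 2 * K * M / lam * exp (lam / 2 * \<xi>))"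
  have Eder: "(E has_real_derivative K * M * exp (lam / 2 * \<xi>)) (at \<xi>)" for \<xi>
  proof -
    have "(E has_real_derivative 2 * K * M / lam * (exp (lam / 2 * \<xi>) * (lam / 2 * 1))) (at \<xi>)"
      unfolding E_def by (intro DERIV_cmult DERIV_chain2[OF DERIV_exp] DERIV_cmult DERIV_ident)
    thus ?thesis using lam by (simp add: field_simps)
  qed
  have E0: "E \<xi> \<ge> 0" for \<xi> using K M lam by (simp add: E_def)
  define B2 where "B2 = F \<xi>0 + E \<xi>0"
  define B1 where "B1 = F \<xi>0 - E \<xi>0"
  have FB: "B1 \<le> F \<xi> \<and> F \<xi> \<le> B2" if "\<xi> \<le> \<xi>0" for \<xi>
  proof
    have "(\<lambda>t. F t + E t) \<xi> \<le> (\<lambda>t. F t + E t) \<xi>0"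
    proof (rule DERIV_nonneg_imp_nondecreasing[OF that])
      fix t assume t: "\<xi> \<le> t" "t \<le> \<xi>0"
      have "((\<lambda>t. F t + E t) has_real_derivative (- D t / V t - lam * 1) + K * M * exp (lam / 2 * t)) (at t)"
        by (rule DERIV_add[OF Fder Eder])
      moreover have "(- D t / V t - lam * 1) + K * M * exp (lam / 2 * t) \<ge> 0" using Fb[of t] t by (auto simp: abs_le_iff)
      ultimately show "\<exists>y. ((\<lambda>t. F t + E t) has_real_derivative y) (at t) \<and> 0 \<le> y" by blast
    qed
    thus "F \<xi> \<le> B2" using E0[of \<xi>] unfolding B2_def by simp
    have "(\<lambda>t. F t - E t) \<xi> \<ge> (\<lambda>t. F t - E t) \<xi>0"
    proof (rule DERIV_nonpos_imp_nonincreasing[OF that])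
      fix t assume t: "\<xi> \<le> t" "t \<le> \<xi>0"
      have "((\<lambda>t. F t - E t) has_real_derivative (- D t / V t - lam * 1) - K * M * exp (lam / 2 * t)) (at t)"
        by (rule DERIV_diff[OF Fder Eder])
      moreover have "(- D t / V t - lam * 1) - K * M * exp (lam / 2 * t) \<le> 0" using Fb[of t] t by (auto simp: abs_le_iff)
      ultimately show "\<exists>y. ((\<lambda>t. F t - E t) has_real_derivative y) (at t) \<and> y \<le> 0" by blast
    qed
    thus "B1 \<le> F \<xi>" using E0[of \<xi>] unfolding B1_def by simp
  qed
  have VF: "V \<xi> = exp (F \<xi>) * exp (- lam * \<bar>\<xi>\<bar>)" if "\<xi> \<le> 0" for \<xi>
    using Vpos[of \<xi>] that by (simp add: F_def Lg_def exp_add[symmetric] exp_diff)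
  show "asym_equiv (\<lambda>\<xi>. \<bar>U \<xi> - um\<bar>) (\<lambda>\<xi>. exp (- lam * \<bar>\<xi>\<bar>)) at_bot"
    unfolding asym_equiv_def
  proof (intro exI[of _ "max 1 (max (exp B2) (exp (- B1)))"] conjI)
    let ?C = "max 1 (max (exp B2) (exp (- B1)))"
    show "?C \<ge> 1" by simp
    show "eventually (\<lambda>\<xi>. exp (- lam * \<bar>\<xi>\<bar>) / ?C \<le> \<bar>U \<xi> - um\<bar> \<and> \<bar>U \<xi> - um\<bar> \<le> ?C * exp (- lam * \<bar>\<xi>\<bar>)) at_bot"
      unfolding eventually_at_bot_linorder
    proof (intro exI[of _ \<xi>0] allI impI)
      fix \<xi> assume x: "\<xi> \<le> \<xi>0"
      have e: "\<bar>U \<xi> - um\<bar> = V \<xi>" using Vpos[of \<xi>] by (simp add: V_def)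
      define X where "X = exp (- lam * \<bar>\<xi>\<bar>)"
      have X: "X > 0" by (simp add: X_def)
      have VX: "V \<xi> = exp (F \<xi>) * X" unfolding X_def using VF x \<xi>0 by simp
      have f: "exp B1 \<le> exp (F \<xi>)" "exp (F \<xi>) \<le> exp B2" using FB[OF x] by auto
      have C1: "1 / ?C \<le> exp B1"
      proof -
        have "exp (- B1) \<le> ?C" by simp
        hence "1 / ?C \<le> 1 / exp (- B1)" by (intro divide_left_mono) auto
        moreover have "1 / exp (- B1) = exp B1" by (simp add: exp_minus divide_inverse)
        ultimately show ?thesis by (rule ord_le_eq_trans)
      qed
      have "X / ?C = (1 / ?C) * X" by simp
      also have "\<dots> \<le> exp (F \<xi>) * X" using C1 f(1) by (intro mult_right_mono[OF _ less_imp_le[OF X]]) linarith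
      finally have 1: "X / ?C \<le> V \<xi>" using VX by simp
      have "exp (F \<xi>) \<le> ?C" using f(2) by (meson max.cobounded1 max.coboundedI2 order_trans)
      hence "exp (F \<xi>) * X \<le> ?C * X" using X by (intro mult_right_mono) auto
      hence 2: "V \<xi> \<le> ?C * X" using VX by simp
      show "X / ?C \<le> \<bar>U \<xi> - um\<bar> \<and> \<bar>U \<xi> - um\<bar> \<le> ?C * X" unfolding e using 1 2 by simp
    qed
  qed
qed

context tw2 begin

lemma gg_alt: "gg s u = - s * u + f u - f 0"
  using g0 unfolding gg_def by (simp add: algebra_simps)

lemma top_from_g:
  assumes A: "0 < A1" "0 < A2" and \<delta>: "0 < \<delta>"
    and b: "\<And>u. 0 < u \<Longrightarrow> u < \<delta> \<Longrightarrow> A1 * u ^ p \<le> - gg s u \<and> - gg s u \<le> A2 * u ^ p"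
    and u: "0 < u" "u < \<delta>"
  shows "A1 / (\<mu> * m) * u powr (real p + 1 - m) \<le> - hh s u
      \<and> - hh s u \<le> A2 / (\<mu> * m) * u powr (real p + 1 - m)"
proof -
  have e: "u ^ p * u powr (1 - m) = u powr (real p + 1 - m)"
    using u by (simp add: powr_realpow[symmetric] powr_add[symmetric] add_diff_eq)
  have w: "u powr (1 - m) > 0" using u by simp
  have pm: "\<mu> * m > 0" using mu m0 by simp
  have X: "- hh s u = (- gg s u) * u powr (1 - m) / (\<mu> * m)" unfolding hh_def by simp
  have l: "A1 * u ^ p * u powr (1 - m) / (\<mu> * m) \<le> (- gg s u) * u powr (1 - m) / (\<mu> * m)"
    by (rule divide_right_mono[OF mult_right_mono[OF conjunct1[OF b[OF u]] less_imp_le[OF w]] less_imp_le[OF pm]])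
  have r: "(- gg s u) * u powr (1 - m) / (\<mu> * m) \<le> A2 * u ^ p * u powr (1 - m) / (\<mu> * m)"
    by (rule divide_right_mono[OF mult_right_mono[OF conjunct2[OF b[OF u]] less_imp_le[OF w]] less_imp_le[OF pm]])
  have e1: "A1 / (\<mu> * m) * u powr (real p + 1 - m) = A1 * u ^ p * u powr (1 - m) / (\<mu> * m)"
    unfolding e[symmetric] by simp
  have e2: "A2 / (\<mu> * m) * u powr (real p + 1 - m) = A2 * u ^ p * u powr (1 - m) / (\<mu> * m)"
    unfolding e[symmetric] by simp
  show "A1 / (\<mu> * m) * u powr (real p + 1 - m) \<le> - hh s u \<and> - hh s u \<le> A2 / (\<mu> * m) * u powr (real p + 1 - m)"
    unfolding e1 e2 X using l r by simp
qed

lemma top_nondeg: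
  assumes "deriv f 0 < s"
  shows "\<exists>A1 A2 \<delta>. 0 < A1 \<and> 0 < A2 \<and> 0 < \<delta> \<and> (\<forall>u. 0 < u \<longrightarrow> u < \<delta> \<longrightarrow> A1 * u ^ 1 \<le> - gg s u \<and> - gg s u \<le> A2 * u ^ 1)"
proof -
  define \<epsilon> where "\<epsilon> = (s - deriv f 0) / 2"
  have \<epsilon>: "\<epsilon> > 0" using assms by (simp add: \<epsilon>_def)
  obtain e where e: "e > 0" "\<And>t. \<bar>t - 0\<bar> < e \<Longrightarrow> \<bar>deriv f t - deriv f 0\<bar> < \<epsilon>"
    using cont_nbhd[OF f'_cont \<epsilon>] by blast
  show ?thesis
  proof (intro exI conjI allI impI)
    show "0 < \<epsilon>" "0 < 3 * \<epsilon>" "0 < e" using \<epsilon> e by auto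
    fix u :: real assume u: "0 < u" "u < e"
    obtain t where t: "0 < t" "t < u" "f u - f 0 = (u - 0) * deriv f t"
      using MVT2[of 0 u f "deriv f"] u f_der by auto
    have ft: "\<bar>deriv f t - deriv f 0\<bar> < \<epsilon>" using e(2)[of t] t u by simp
    have g: "- gg s u = u * (s - deriv f t)" using t(3) unfolding gg_alt by (simp add: algebra_simps)
    have ft2: "- \<epsilon> < deriv f t - deriv f 0 \<and> deriv f t - deriv f 0 < \<epsilon>" using abs_less_iff[THEN iffD1, OF ft] by simp
    have "\<epsilon> \<le> s - deriv f t" using conjunct2[OF ft2] unfolding \<epsilon>_def by argo
    moreover have "s - deriv f t \<le> 3 * \<epsilon>" using conjunct1[OF ft2] unfolding \<epsilon>_def by argo
    ultimately
    show "\<epsilon> * u ^ 1 \<le> - gg s u" "- gg s u \<le> 3 * \<epsilon> * u ^ 1"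
      unfolding g using u by (auto simp: mult.commute intro: mult_left_mono)
  qed
qed

lemma top_deg:
  assumes k: "k \<ge> 1" and f1: "deriv f 0 = s" and fj: "\<forall>j\<in>{2..k}. (deriv ^^ j) f 0 = 0"
    and fk: "(deriv ^^ (k + 1)) f 0 \<noteq> 0"
  shows "\<exists>A1 A2 \<delta>. 0 < A1 \<and> 0 < A2 \<and> 0 < \<delta> \<and> (\<forall>u. 0 < u \<longrightarrow> u < \<delta> \<longrightarrow> A1 * u ^ (k + 1) \<le> - gg s u \<and> - gg s u \<le> A2 * u ^ (k + 1))"
proof -
  define A where "A = (deriv ^^ (k + 1)) f 0"
  have A0: "\<bar>A\<bar> / 2 > 0" using fk by (simp add: A_def)
  obtain e where e: "e > 0" "\<And>t. \<bar>t - 0\<bar> < e \<Longrightarrow> \<bar>(deriv ^^ (k + 1)) f t - (deriv ^^ (k + 1)) f 0\<bar> < \<bar>A\<bar> / 2"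
    using cont_nbhd[OF fk_cont A0] by blast
  have taylor: "\<exists>t. 0 < t \<and> t < u \<and> gg s u = (deriv ^^ (k + 1)) f t / fact (k + 1) * u ^ (k + 1)"
    if u: "0 < u" for u
  proof -
    obtain t where t: "0 < t" "t < u"
      "f u = (\<Sum>j<k + 1. (deriv ^^ j) f 0 / fact j * u ^ j) + (deriv ^^ (k + 1)) f t / fact (k + 1) * u ^ (k + 1)"
      using Maclaurin[OF u, of "k + 1" "\<lambda>j. (deriv ^^ j) f" f] fk_der by auto
    have "(\<Sum>j<k + 1. (deriv ^^ j) f 0 / fact j * u ^ j) = (\<Sum>j<2. (deriv ^^ j) f 0 / fact j * u ^ j)"
    proof (rule sum.mono_neutral_right)
      show "finite {..<k + 1}" by simp
      show "{..<2} \<subseteq> {..<k + 1}" using k by auto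
      show "\<forall>i\<in>{..<k + 1} - {..<2}. (deriv ^^ i) f 0 / fact i * u ^ i = 0" using fj by auto
    qed
    also have "\<dots> = f 0 + deriv f 0 * u" by (simp add: numeral_2_eq_2)
    finally have "f u = f 0 + s * u + (deriv ^^ (k + 1)) f t / fact (k + 1) * u ^ (k + 1)"
      using t(3) f1 by simp
    thus ?thesis using t unfolding gg_alt by (intro exI[of _ t]) simp
  qed
  have Aneg: "A < 0"
  proof (rule ccontr)
    assume "\<not> A < 0"
    moreover have "A \<noteq> 0" unfolding A_def by (rule fk)
    ultimately have Ap: "A > 0" by linarith
    define u where "u = min e um / 2"
    have u: "0 < u" "u < e" "u < um" using e um0 by (auto simp: u_def)
    obtain t where t: "0 < t" "t < u" "gg s u = (deriv ^^ (k + 1)) f t / fact (k + 1) * u ^ (k + 1)"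
      using taylor[OF u(1)] by blast
    have "\<bar>t - 0\<bar> < e" using t u by simp
    from e(2)[OF this] have "\<bar>(deriv ^^ (k + 1)) f t - A\<bar> < \<bar>A\<bar> / 2" by (simp only: A_def[symmetric])
    note abs_less_iff[THEN iffD1, OF this]
    hence "- ((deriv ^^ (k + 1)) f t - A) < \<bar>A\<bar> / 2" by (rule conjunct2)
    moreover have Aabs: "\<bar>A\<bar> = A" using Ap by simp
    ultimately have "- ((deriv ^^ (k + 1)) f t - A) < A / 2" by simp
    hence pos: "(deriv ^^ (k + 1)) f t > 0" using Ap by argo
    have "gg s u > 0" unfolding t(3)
      by (rule mult_pos_pos[OF divide_pos_pos[OF pos fact_gt_zero] zero_less_power[OF u(1)]])
    thus False using gneg[OF u(1,3)] by simp
  qed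
  define c :: real where "c = fact (k + 1)"
  have c: "c > 0" by (simp add: c_def)
  show ?thesis
  proof (intro exI conjI allI impI)
    show "0 < \<bar>A\<bar> / 2 / c" "0 < 3 * \<bar>A\<bar> / 2 / c" "0 < e" using A0 c e by auto
    fix u :: real assume u: "0 < u" "u < e"
    obtain t where t: "0 < t" "t < u" "gg s u = (deriv ^^ (k + 1)) f t / fact (k + 1) * u ^ (k + 1)"
      using taylor[OF u(1)] by blast
    have "\<bar>t - 0\<bar> < e" using t u by simp
    from e(2)[OF this] have "\<bar>(deriv ^^ (k + 1)) f t - A\<bar> < \<bar>A\<bar> / 2" by (simp only: A_def[symmetric])
    hence ft0: "(deriv ^^ (k + 1)) f t - A < \<bar>A\<bar> / 2 \<and> - ((deriv ^^ (k + 1)) f t - A) < \<bar>A\<bar> / 2"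
      by (rule abs_less_iff[THEN iffD1])
    have Aabs: "\<bar>A\<bar> = - A" using Aneg by simp
    define X where "X = (deriv ^^ (k + 1)) f t"
    have x1: "X - A < - A / 2" using conjunct1[OF ft0] unfolding Aabs X_def .
    have x2: "- (X - A) < - A / 2" using conjunct2[OF ft0] unfolding Aabs X_def .
    have "- A / 2 \<le> - X" using x1 by argo
    hence ft1: "\<bar>A\<bar> / 2 \<le> - (deriv ^^ (k + 1)) f t" unfolding Aabs X_def by simp
    have "- X \<le> 3 * - A / 2" using x2 by argo
    hence ft2: "- (deriv ^^ (k + 1)) f t \<le> 3 * \<bar>A\<bar> / 2" unfolding Aabs X_def by simp
    note ft = ft1 ft2
    have g: "- gg s u = (- (deriv ^^ (k + 1)) f t) / c * u ^ (k + 1)" using t(3) by (simp add: c_def)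
    have up: "u ^ (k + 1) > 0" using u by simp
    show "\<bar>A\<bar> / 2 / c * u ^ (k + 1) \<le> - gg s u" unfolding g
      by (rule mult_right_mono[OF divide_right_mono[OF ft(1) less_imp_le[OF c]] less_imp_le[OF up]])
    show "- gg s u \<le> 3 * \<bar>A\<bar> / 2 / c * u ^ (k + 1)" unfolding g
      by (rule mult_right_mono[OF divide_right_mono[OF ft(2) less_imp_le[OF c]] less_imp_le[OF up]])
  qed
qed

end

context tw2 begin

lemma bot_bound:
  "\<exists>K \<delta>. K \<ge> 0 \<and> \<delta> > 0 \<and> (\<forall>u. um - u < \<delta> \<longrightarrow> u < um \<longrightarrow>
     \<bar>hh s u + um powr (1 - m) / (\<mu> * m) * (deriv f um - s) * (um - u)\<bar> \<le> K * (um - u)\<^sup>2)"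
proof -
  define A where "A = deriv f um - s"
  define w0 where "w0 = um powr (1 - m)"
  have w0: "w0 > 0" using um0 by (simp add: w0_def)
  have pm: "\<mu> * m > 0" using mu m0 by simp
  obtain e2 where e2: "e2 > 0" "\<And>t. \<bar>t - um\<bar> < e2 \<Longrightarrow> \<bar>(deriv ^^ 2) f t - (deriv ^^ 2) f um\<bar> < 1"
    using cont_nbhd[OF fk_cont[where k=2 and x=um], of 1] by auto
  define B where "B = \<bar>(deriv ^^ 2) f um\<bar> + 1"
  have B: "B \<ge> 0" by (simp add: B_def)
  have wder: "((\<lambda>u. u powr (1 - m)) has_real_derivative (1 - m) * um powr (1 - m - 1) * 1) (at um)"
    using DERIV_fun_powr[OF DERIV_ident um0, of "1 - m"] by simp
  obtain Lw \<delta>w where Lw: "Lw > 0" "\<delta>w > 0"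
    and Lwb: "\<And>u. \<bar>u - um\<bar> < \<delta>w \<Longrightarrow> \<bar>u powr (1 - m) - um powr (1 - m)\<bar> \<le> Lw * \<bar>u - um\<bar>"
    using local_lip[OF wder] by auto
  define \<delta> where "\<delta> = min e2 (min \<delta>w (um / 2))"
  have \<delta>: "\<delta> > 0" using e2 Lw um0 by (simp add: \<delta>_def)
  define K where "K = (B / 2 * w0 + \<bar>A\<bar> * Lw) / (\<mu> * m)"
  have K: "K \<ge> 0" using B w0 Lw pm by (simp add: K_def)
  show ?thesis
  proof (intro exI conjI allI impI)
    show "K \<ge> 0" "\<delta> > 0" by (fact K, fact \<delta>)
    fix u assume u1: "um - u < \<delta>" and u2: "u < um"
    have upos: "u > 0" using u1 um0 unfolding \<delta>_def by auto
    have ue2: "um - u < e2" and uw: "\<bar>u - um\<bar> < \<delta>w" using u1 u2 unfolding \<delta>_def by auto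
    obtain t where t: "u < t" "t < um"
      "f u = (\<Sum>j<2. (deriv ^^ j) f um / fact j * (u - um) ^ j) + (deriv ^^ 2) f t / fact 2 * (u - um) ^ 2"
      using Taylor_down[of 2 "\<lambda>j. (deriv ^^ j) f" f u um um] fk_der u2 by auto
    have "(\<Sum>j<2. (deriv ^^ j) f um / fact j * (u - um) ^ j) = f um + deriv f um * (u - um)"
      by (simp add: numeral_2_eq_2)
    hence E1: "gg s u - A * (u - um) = (deriv ^^ 2) f t / 2 * (u - um)\<^sup>2"
      using t(3) unfolding gg_def A_def by (simp add: algebra_simps)
    have "\<bar>t - um\<bar> < e2" using t ue2 by simp
    hence "\<bar>(deriv ^^ 2) f t\<bar> \<le> B" using e2(2) unfolding B_def by fastforce
    hence E1b: "\<bar>gg s u - A * (u - um)\<bar> \<le> B / 2 * (u - um)\<^sup>2"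
      unfolding E1 by (simp add: abs_mult mult_right_mono)
    define w where "w = u powr (1 - m)"
    have w: "0 \<le> w" "w \<le> w0" unfolding w_def w0_def using upos u2 m1 by (auto intro: powr_mono2)
    have wb: "\<bar>w - w0\<bar> \<le> Lw * \<bar>u - um\<bar>" unfolding w_def w0_def by (rule Lwb[OF uw])
    have id: "hh s u + um powr (1 - m) / (\<mu> * m) * (deriv f um - s) * (um - u)
        = ((gg s u - A * (u - um)) * w + A * (u - um) * (w - w0)) / (\<mu> * m)"
      unfolding hh_def w_def w0_def A_def using pm by (simp add: eq_divide_eq distrib_right) (simp add: algebra_simps)
    have "\<bar>(gg s u - A * (u - um)) * w + A * (u - um) * (w - w0)\<bar>
        \<le> \<bar>gg s u - A * (u - um)\<bar> * w + \<bar>A\<bar> * \<bar>u - um\<bar> * \<bar>w - w0\<bar>"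
      using w by (metis (no_types, lifting) abs_mult abs_of_nonneg abs_triangle_ineq)
    also have "\<dots> \<le> B / 2 * (u - um)\<^sup>2 * w0 + \<bar>A\<bar> * \<bar>u - um\<bar> * (Lw * \<bar>u - um\<bar>)"
    proof (rule add_mono)
      show "\<bar>gg s u - A * (u - um)\<bar> * w \<le> B / 2 * (u - um)\<^sup>2 * w0"
        using E1b w B by (intro mult_mono) auto
      show "\<bar>A\<bar> * \<bar>u - um\<bar> * \<bar>w - w0\<bar> \<le> \<bar>A\<bar> * \<bar>u - um\<bar> * (Lw * \<bar>u - um\<bar>)"
        using wb by (intro mult_left_mono) auto
    qed
    also have "\<dots> = (B / 2 * w0 + \<bar>A\<bar> * Lw) * (um - u)\<^sup>2"
      by (simp add: power2_eq_square algebra_simps abs_mult_self_eq)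
    finally have "\<bar>(gg s u - A * (u - um)) * w + A * (u - um) * (w - w0)\<bar> \<le> (B / 2 * w0 + \<bar>A\<bar> * Lw) * (um - u)\<^sup>2" .
    hence "\<bar>(gg s u - A * (u - um)) * w + A * (u - um) * (w - w0)\<bar> / (\<mu> * m) \<le> (B / 2 * w0 + \<bar>A\<bar> * Lw) * (um - u)\<^sup>2 / (\<mu> * m)"
      using pm by (intro divide_right_mono) auto
    thus "\<bar>hh s u + um powr (1 - m) / (\<mu> * m) * (deriv f um - s) * (um - u)\<bar> \<le> K * (um - u)\<^sup>2"
      unfolding id K_def using pm by simp
  qed
qed

end

context tw2 begin

lemma bot_decay:
  assumes P: "dec_profile m \<mu> f um 0 s U" and sl: "s < deriv f um"
  shows "um powr (1 - m) / (\<mu> * m) * (deriv f um - s) > 0"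
    and "asym_equiv (\<lambda>\<xi>. \<bar>deriv U \<xi>\<bar>) (\<lambda>\<xi>. \<bar>U \<xi> - um\<bar>) at_bot"
    and "asym_equiv (\<lambda>\<xi>. \<bar>U \<xi> - um\<bar>) (\<lambda>\<xi>. exp (- (um powr (1 - m) / (\<mu> * m) * (deriv f um - s)) * \<bar>\<xi>\<bar>)) at_bot"
proof -
  define lam where "lam = um powr (1 - m) / (\<mu> * m) * (deriv f um - s)"
  show lp: "um powr (1 - m) / (\<mu> * m) * (deriv f um - s) > 0"
    using um0 mu m0 sl by simp
  obtain K \<delta> where K: "K \<ge> 0" "\<delta> > 0" and Kb: "\<And>u. um - u < \<delta> \<Longrightarrow> u < um \<Longrightarrow>
     \<bar>hh s u + lam * (um - u)\<bar> \<le> K * (um - u)\<^sup>2"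
    using bot_bound unfolding lam_def by blast
  have lim: "(U \<longlongrightarrow> um) at_bot" using P unfolding dec_profile_def by auto
  have bnd: "\<bar>deriv U \<xi> + lam * (um - U \<xi>)\<bar> \<le> K * (um - U \<xi>)\<^sup>2" if "um - U \<xi> < \<delta>" for \<xi>
    using Kb[OF that profile_ode(2)[OF P]] profile_ode(5)[OF P] by simp
  note r = decay_bot[where U = U and D = "deriv U" and um = um and lam = lam and K = K and \<delta> = \<delta>,
      OF profile_basic(5)[OF P] profile_ode(2)[OF P] lim lp[folded lam_def] K bnd]
  show "asym_equiv (\<lambda>\<xi>. \<bar>deriv U \<xi>\<bar>) (\<lambda>\<xi>. \<bar>U \<xi> - um\<bar>) at_bot" by (rule r(1))
  show "asym_equiv (\<lambda>\<xi>. \<bar>U \<xi> - um\<bar>) (\<lambda>\<xi>. exp (- (um powr (1 - m) / (\<mu> * m) * (deriv f um - s)) * \<bar>\<xi>\<bar>)) at_bot"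
    using r(2) unfolding lam_def .
qed

lemma top_decay:
  assumes P: "dec_profile m \<mu> f um 0 s U" and p: "p \<ge> 1"
    and ex: "\<exists>A1 A2 \<delta>. 0 < A1 \<and> 0 < A2 \<and> 0 < \<delta> \<and> (\<forall>u. 0 < u \<longrightarrow> u < \<delta> \<longrightarrow> A1 * u ^ p \<le> - gg s u \<and> - gg s u \<le> A2 * u ^ p)"
  shows "asym_equiv (\<lambda>\<xi>. \<bar>deriv U \<xi>\<bar> powr (1 / (real p + 1 - m))) (\<lambda>\<xi>. \<bar>U \<xi> - 0\<bar>) at_top"
    and "asym_equiv (\<lambda>\<xi>. \<bar>U \<xi> - 0\<bar>) (\<lambda>\<xi>. \<bar>\<xi>\<bar> powr (- 1 / (real p - m))) at_top"
proof -
  obtain A1 A2 \<delta> where A: "0 < A1" "0 < A2" "0 < \<delta>"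
    and b: "\<And>u. 0 < u \<Longrightarrow> u < \<delta> \<Longrightarrow> A1 * u ^ p \<le> - gg s u \<and> - gg s u \<le> A2 * u ^ p"
    using ex by blast
  have pm: "\<mu> * m > 0" using mu m0 by simp
  have lim: "(U \<longlongrightarrow> 0) at_top" using P unfolding dec_profile_def by auto
  have q: "real p + 1 - m > 1" using p m1 by simp
  have bnd: "A1 / (\<mu> * m) * U \<xi> powr (real p + 1 - m) \<le> - deriv U \<xi> \<and>
      - deriv U \<xi> \<le> A2 / (\<mu> * m) * U \<xi> powr (real p + 1 - m)" if "U \<xi> < \<delta>" for \<xi>
    using top_from_g[OF A(1) A(2) A(3) b profile_ode(1)[OF P] that] profile_ode(5)[OF P] by simp
  note r = decay_top[where U = U and D = "deriv U" and q = "real p + 1 - m" and r = "real p - m",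
      OF profile_basic(5)[OF P] profile_ode(1)[OF P] lim q _ _ _ A(3) bnd]
  show "asym_equiv (\<lambda>\<xi>. \<bar>deriv U \<xi>\<bar> powr (1 / (real p + 1 - m))) (\<lambda>\<xi>. \<bar>U \<xi> - 0\<bar>) at_top"
    using r(1) A pm by simp
  show "asym_equiv (\<lambda>\<xi>. \<bar>U \<xi> - 0\<bar>) (\<lambda>\<xi>. \<bar>\<xi>\<bar> powr (- 1 / (real p - m))) at_top"
    using r(2) A pm by simp
qed

end

theorem theorem2p1:
  fixes m \<mu> um up :: real and f :: "real \<Rightarrow> real"
  assumes m0: "0 < m" and m1: "m < 1" and mu: "0 < \<mu>"
    and f_smooth: "smooth_fun f"
    and up0: "up = 0" and umup: "um > up"
  defines "g \<equiv> (\<lambda>s u. - s * (u - um) + f u - f um)"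
  shows
    "(\<forall>s U. dec_profile m \<mu> f um up s U \<longrightarrow>
        s = (f up - f um) / (up - um) \<and> (\<forall>u\<in>{up<..<um}. g s u < 0))
   \<and>
    (\<forall>s. s = (f up - f um) / (up - um) \<and> (\<forall>u\<in>{up<..<um}. g s u < 0) \<longrightarrow>
        (\<exists>U. dec_profile m \<mu> f um up s U) \<and>
        (\<forall>U V. dec_profile m \<mu> f um up s U \<and> dec_profile m \<mu> f um up s V \<longrightarrow>
           (\<exists>c. \<forall>\<xi>. V \<xi> = U (\<xi> + c))))
   \<and>
    (\<forall>s U. s = (f up - f um) / (up - um) \<and> (\<forall>u\<in>{up<..<um}. g s u < 0) \<and>
           dec_profile m \<mu> f um up s U \<longrightarrow>
       (let lam = um powr (1 - m) / (\<mu> * m) * (deriv f um - s) in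
         (deriv f up < s \<and> s < deriv f um \<longrightarrow>
            lam > 0 \<and>
            asym_equiv (\<lambda>\<xi>. \<bar>deriv U \<xi>\<bar> powr (1 / (2 - m))) (\<lambda>\<xi>. \<bar>U \<xi> - up\<bar>) at_top \<and>
            asym_equiv (\<lambda>\<xi>. \<bar>U \<xi> - up\<bar>) (\<lambda>\<xi>. \<bar>\<xi>\<bar> powr (- 1 / (1 - m))) at_top \<and>
            asym_equiv (\<lambda>\<xi>. \<bar>deriv U \<xi>\<bar>) (\<lambda>\<xi>. \<bar>U \<xi> - um\<bar>) at_bot \<and>
            asym_equiv (\<lambda>\<xi>. \<bar>U \<xi> - um\<bar>) (\<lambda>\<xi>. exp (- lam * \<bar>\<xi>\<bar>)) at_bot) \<and>
         (\<forall>k::nat. deriv f up = s \<and> s < deriv f um \<and> k \<ge> 1 \<and>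
            (\<forall>j\<in>{2..k}. (deriv ^^ j) f up = 0) \<and> (deriv ^^ (k + 1)) f up \<noteq> 0 \<longrightarrow>
            lam > 0 \<and>
            asym_equiv (\<lambda>\<xi>. \<bar>deriv U \<xi>\<bar> powr (1 / (real k + 2 - m))) (\<lambda>\<xi>. \<bar>U \<xi> - up\<bar>) at_top \<and>
            asym_equiv (\<lambda>\<xi>. \<bar>U \<xi> - up\<bar>) (\<lambda>\<xi>. \<bar>\<xi>\<bar> powr (- 1 / (real k + 1 - m))) at_top \<and>
            asym_equiv (\<lambda>\<xi>. \<bar>deriv U \<xi>\<bar>) (\<lambda>\<xi>. \<bar>U \<xi> - um\<bar>) at_bot \<and>
            asym_equiv (\<lambda>\<xi>. \<bar>U \<xi> - um\<bar>) (\<lambda>\<xi>. exp (- lam * \<bar>\<xi>\<bar>)) at_bot)))"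
proof -
  have um0: "0 < um" using umup up0 by simp
  interpret tw m \<mu> um f using m0 m1 mu f_smooth um0 by unfold_locales
  have geq: "g s u = gg s u" for s u unfolding g_def gg_def by simp
  have P1: "s = (f 0 - f um) / (0 - um) \<and> (\<forall>u\<in>{0<..<um}. g s u < 0)"
    if P: "dec_profile m \<mu> f um 0 s U" for s U
    using profile_basic(1)[OF P] profile_gneg[OF P] unfolding geq by auto
  have P2: "(\<exists>U. dec_profile m \<mu> f um 0 s U) \<and>
        (\<forall>U V. dec_profile m \<mu> f um 0 s U \<and> dec_profile m \<mu> f um 0 s V \<longrightarrow> (\<exists>c. \<forall>\<xi>. V \<xi> = U (\<xi> + c)))"
    if RH: "s = (f 0 - f um) / (0 - um)" and gn: "\<forall>u\<in>{0<..<um}. g s u < 0" for s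
  proof -
    interpret tw2 m \<mu> um f s using RH gn unfolding geq by unfold_locales auto
    show ?thesis using Uc_profile profile_unique by blast
  qed
  have P3: "(let lam = um powr (1 - m) / (\<mu> * m) * (deriv f um - s) in
         (deriv f 0 < s \<and> s < deriv f um \<longrightarrow>
            lam > 0 \<and>
            asym_equiv (\<lambda>\<xi>. \<bar>deriv U \<xi>\<bar> powr (1 / (2 - m))) (\<lambda>\<xi>. \<bar>U \<xi> - 0\<bar>) at_top \<and>
            asym_equiv (\<lambda>\<xi>. \<bar>U \<xi> - 0\<bar>) (\<lambda>\<xi>. \<bar>\<xi>\<bar> powr (- 1 / (1 - m))) at_top \<and>
            asym_equiv (\<lambda>\<xi>. \<bar>deriv U \<xi>\<bar>) (\<lambda>\<xi>. \<bar>U \<xi> - um\<bar>) at_bot \<and>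
            asym_equiv (\<lambda>\<xi>. \<bar>U \<xi> - um\<bar>) (\<lambda>\<xi>. exp (- lam * \<bar>\<xi>\<bar>)) at_bot) \<and>
         (\<forall>k::nat. deriv f 0 = s \<and> s < deriv f um \<and> k \<ge> 1 \<and>
            (\<forall>j\<in>{2..k}. (deriv ^^ j) f 0 = 0) \<and> (deriv ^^ (k + 1)) f 0 \<noteq> 0 \<longrightarrow>
            lam > 0 \<and>
            asym_equiv (\<lambda>\<xi>. \<bar>deriv U \<xi>\<bar> powr (1 / (real k + 2 - m))) (\<lambda>\<xi>. \<bar>U \<xi> - 0\<bar>) at_top \<and>
            asym_equiv (\<lambda>\<xi>. \<bar>U \<xi> - 0\<bar>) (\<lambda>\<xi>. \<bar>\<xi>\<bar> powr (- 1 / (real k + 1 - m))) at_top \<and>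
            asym_equiv (\<lambda>\<xi>. \<bar>deriv U \<xi>\<bar>) (\<lambda>\<xi>. \<bar>U \<xi> - um\<bar>) at_bot \<and>
            asym_equiv (\<lambda>\<xi>. \<bar>U \<xi> - um\<bar>) (\<lambda>\<xi>. exp (- lam * \<bar>\<xi>\<bar>)) at_bot))"
    if RH: "s = (f 0 - f um) / (0 - um)" and gn: "\<forall>u\<in>{0<..<um}. g s u < 0"
      and P: "dec_profile m \<mu> f um 0 s U" for s U
  proof -
    interpret tw2 m \<mu> um f s using RH gn unfolding geq by unfold_locales auto
    have nd: "lam > 0 \<and>
            asym_equiv (\<lambda>\<xi>. \<bar>deriv U \<xi>\<bar> powr (1 / (2 - m))) (\<lambda>\<xi>. \<bar>U \<xi> - 0\<bar>) at_top \<and>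
            asym_equiv (\<lambda>\<xi>. \<bar>U \<xi> - 0\<bar>) (\<lambda>\<xi>. \<bar>\<xi>\<bar> powr (- 1 / (1 - m))) at_top \<and>
            asym_equiv (\<lambda>\<xi>. \<bar>deriv U \<xi>\<bar>) (\<lambda>\<xi>. \<bar>U \<xi> - um\<bar>) at_bot \<and>
            asym_equiv (\<lambda>\<xi>. \<bar>U \<xi> - um\<bar>) (\<lambda>\<xi>. exp (- lam * \<bar>\<xi>\<bar>)) at_bot"
      if lam: "lam = um powr (1 - m) / (\<mu> * m) * (deriv f um - s)" and c1: "deriv f 0 < s" and c2: "s < deriv f um" for lam
    proof -
      note B = bot_decay[OF P c2]
      note T = top_decay[OF P _ top_nondeg[OF c1], simplified]
      have e1: "real 1 + 1 - m = 2 - m" "real 1 - m = 1 - m" by simp_all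
      show ?thesis using B T unfolding lam by (simp add: e1)
    qed
    have dg: "lam > 0 \<and>
            asym_equiv (\<lambda>\<xi>. \<bar>deriv U \<xi>\<bar> powr (1 / (real k + 2 - m))) (\<lambda>\<xi>. \<bar>U \<xi> - 0\<bar>) at_top \<and>
            asym_equiv (\<lambda>\<xi>. \<bar>U \<xi> - 0\<bar>) (\<lambda>\<xi>. \<bar>\<xi>\<bar> powr (- 1 / (real k + 1 - m))) at_top \<and>
            asym_equiv (\<lambda>\<xi>. \<bar>deriv U \<xi>\<bar>) (\<lambda>\<xi>. \<bar>U \<xi> - um\<bar>) at_bot \<and>
            asym_equiv (\<lambda>\<xi>. \<bar>U \<xi> - um\<bar>) (\<lambda>\<xi>. exp (- lam * \<bar>\<xi>\<bar>)) at_bot"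
      if lam: "lam = um powr (1 - m) / (\<mu> * m) * (deriv f um - s)" and c1: "deriv f 0 = s" and c2: "s < deriv f um"
        and k: "k \<ge> 1" and fj: "\<forall>j\<in>{2..k}. (deriv ^^ j) f 0 = 0" and fk: "(deriv ^^ (k + 1)) f 0 \<noteq> 0" for lam k
    proof -
      note B = bot_decay[OF P c2]
      have kk: "k + 1 \<ge> 1" by simp
      note T = top_decay[OF P kk top_deg[OF k c1 fj fk]]
      have e1: "real (k + 1) + 1 - m = real k + 2 - m" "real (k + 1) - m = real k + 1 - m" by simp_all
      show ?thesis using B T unfolding lam e1 by simp
    qed
    show ?thesis unfolding Let_def using nd dg by blast
  qed
  show ?thesis unfolding up0 using P1 P2 P3 by blast
qed


end
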